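(* Let $\rho$ be a state with $\lambda(\rho)>0$. Then for all $\epsilon>0$ and all positive integers $n,k$, \[ \mu_k^\epsilon(\rho^{\otimes n})\le\log k+\log\lambda(\rho)+\log\left[1+\frac{2^{\widetilde H_{\max}^{\epsilon^2/4}(J^n|(S^\rho)^n)_{\delta_\rho^n}}}{k\,\lambda(\rho)}\right]. \]
   Context: $\rho$ is a $d\times d$ density matrix in a fixed computational basis; $\Delta$ is the dephasing map (keeping only diagonal entries), $\Pi_I=\sum_{i\in I}|i\rangle\langle i|$, logs base 2. $R^\rho=\Delta(\rho)^{-1/2}\rho\Delta(\rho)^{-1/2}$ (inverse on the support). $\lambda(\rho)=\max\{|R^\rho_{ij}|:1\le i<j\le d,\ |R^\rho_{ij}|<1\}$, set to $0$ if this set is empty. $\mu_k(\sigma)=\max_{I\subseteq[\dim],|I|\le k}\log\|\Pi_IR^\sigma\Pi_I\|_\infty$ and $\mu_k^\epsilon(\omega)=\min_{\sigma:\|\sigma-\omega\|_1\le\epsilon}\mu_k(\sigma)$ over density matrices $\sigma$. Let $G_\rho$ be the graph on $[d]$ with edges $(i,j)$ whenever $|\rho_{ij}|=\sqrt{\rho_{ii}\rho_{jj}}>0$; its connected components $\{I_s\}_{s\in\mathcal S}$ partition $[d]$. Let $\delta_\rho$ be the probability distribution $\delta_\rho(j)=\rho_{jj}$ on $[d]$, $J$ the identity random variable on $[d]$ and $S^\rho$ the function $j\mapsto s$ with $j\in I_s$; $\delta_\rho^n$ is the i.i.d. product distribution on $[d]^n$ and $J^n,(S^\rho)^n$ the corresponding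 tuples. For random variables $X,Y$ with joint distribution $q$ on a finite set, $H_{\max}(X|Y)_q=\max_{y:q(y)>0}\log|\mathrm{supp}\,q_{X|Y=y}|$. For a probability vector $p$ on a finite set $\Omega$ and $\epsilon>0$, $V_\epsilon(p)=\{\Pi_Ip/\sum_{i\in I}p_i:\ I\subseteq\Omega\}\cap\{q:|q-p|_1\le\epsilon\}$, and $\widetilde H^\epsilon_{\max}(X|Y)_p=\min_{q\in V_\epsilon(p)}H_{\max}(X|Y)_q$. *)

theory Defs
  imports Complex_Main
begin

text \<open>Matrices are functions 'i => 'i => complex, considered on a finite carrier set B
  of indices (the computational basis). Vectors are functions 'i => complex.\<close>

definition vnorm :: "'i set \<Rightarrow> ('i \<Rightarrow> complex) \<Rightarrow> real" where
  "vnorm B v = sqrt (\<Sum>i\<in>B. (cmod (v i))^2)"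

definition mvec :: "'i set \<Rightarrow> ('i \<Rightarrow> 'i \<Rightarrow> complex) \<Rightarrow> ('i \<Rightarrow> complex) \<Rightarrow> 'i \<Rightarrow> complex" where
  "mvec B M v = (\<lambda>i. \<Sum>j\<in>B. M i j * v j)"

definition opnorm :: "'i set \<Rightarrow> ('i \<Rightarrow> 'i \<Rightarrow> complex) \<Rightarrow> real" where
  "opnorm B M = Sup {vnorm B (mvec B M v) | v. vnorm B v = 1}"

definition mmul :: "'i set \<Rightarrow> ('i \<Rightarrow> 'i \<Rightarrow> complex) \<Rightarrow> ('i \<Rightarrow> 'i \<Rightarrow> complex) \<Rightarrow> 'i \<Rightarrow> 'i \<Rightarrow> complex" where
  "mmul B X Y = (\<lambda>i k. \<Sum>j\<in>B. X i j * Y j k)"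

definition mtrace :: "'i set \<Rightarrow> ('i \<Rightarrow> 'i \<Rightarrow> complex) \<Rightarrow> complex" where
  "mtrace B X = (\<Sum>i\<in>B. X i i)"

definition trnorm :: "'i set \<Rightarrow> ('i \<Rightarrow> 'i \<Rightarrow> complex) \<Rightarrow> real" where
  "trnorm B X = Sup {cmod (mtrace B (mmul B X Y)) | Y. opnorm B Y \<le> 1}"

definition density :: "'i set \<Rightarrow> ('i \<Rightarrow> 'i \<Rightarrow> complex) \<Rightarrow> bool" where
  "density B M \<longleftrightarrow>
     (\<forall>i\<in>B. \<forall>j\<in>B. M i j = cnj (M j i)) \<and>
     (\<forall>v. Re (\<Sum>i\<in>B. \<Sum>j\<in>B. cnj (v i) * M i j * v j) \<ge> 0) \<and>
     mtrace B M = 1"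

text \<open>R^M = Delta(M)^{-1/2} M Delta(M)^{-1/2}, inverse taken on the support.\<close>
definition Rmat :: "('i \<Rightarrow> 'i \<Rightarrow> complex) \<Rightarrow> 'i \<Rightarrow> 'i \<Rightarrow> complex" where
  "Rmat M i j = (if Re (M i i) > 0 \<and> Re (M j j) > 0
      then M i j / complex_of_real (sqrt (Re (M i i) * Re (M j j))) else 0)"

definition proj :: "'i set \<Rightarrow> ('i \<Rightarrow> 'i \<Rightarrow> complex) \<Rightarrow> 'i \<Rightarrow> 'i \<Rightarrow> complex" where
  "proj I M = (\<lambda>i j. if i \<in> I \<and> j \<in> I then M i j else 0)"

text \<open>mu_k(sigma) = max_{I, |I|<=k} log ||Pi_I R Pi_I||_inf (log is monotone).\<close>
definition mu :: "nat \<Rightarrow> 'i set \<Rightarrow> ('i \<Rightarrow> 'i \<Rightarrow> complex) \<Rightarrow> real" where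
  "mu k B \<sigma> = log 2 (Max {opnorm B (proj I (Rmat \<sigma>)) | I. I \<subseteq> B \<and> card I \<le> k})"

definition mu_eps :: "nat \<Rightarrow> real \<Rightarrow> 'i set \<Rightarrow> ('i \<Rightarrow> 'i \<Rightarrow> complex) \<Rightarrow> real" where
  "mu_eps k \<epsilon> B \<omega> = Inf {mu k B \<sigma> | \<sigma>. density B \<sigma> \<and> trnorm B (\<lambda>i j. \<sigma> i j - \<omega> i j) \<le> \<epsilon>}"

definition lam :: "nat \<Rightarrow> (nat \<Rightarrow> nat \<Rightarrow> complex) \<Rightarrow> real" where
  "lam d \<rho> = (let S = {cmod (Rmat \<rho> i j) | i j. i < j \<and> j < d \<and> cmod (Rmat \<rho> i j) < 1}
              in if S = {} then 0 else Max S)"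

definition tuples :: "nat \<Rightarrow> nat \<Rightarrow> nat list set" where
  "tuples d n = {xs. length xs = n \<and> set xs \<subseteq> {0..<d}}"

definition tensor_pow :: "nat \<Rightarrow> (nat \<Rightarrow> nat \<Rightarrow> complex) \<Rightarrow> nat list \<Rightarrow> nat list \<Rightarrow> complex" where
  "tensor_pow n \<rho> = (\<lambda>xs ys. \<Prod>i<n. \<rho> (xs ! i) (ys ! i))"

text \<open>Graph G_rho and its connected components; S^rho maps j to its component.\<close>
definition gedge :: "nat \<Rightarrow> (nat \<Rightarrow> nat \<Rightarrow> complex) \<Rightarrow> (nat \<times> nat) set" where
  "gedge d \<rho> = {(i, j). i < d \<and> j < d \<and> i \<noteq> j \<and>
      cmod (\<rho> i j) = sqrt (Re (\<rho> i i) * Re (\<rho> j j)) \<and> sqrt (Re (\<rho> i i) * Re (\<rho> j j)) > 0}"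

definition Scomp :: "nat \<Rightarrow> (nat \<Rightarrow> nat \<Rightarrow> complex) \<Rightarrow> nat \<Rightarrow> nat set" where
  "Scomp d \<rho> j = {i. (j, i) \<in> (gedge d \<rho> \<union> (gedge d \<rho>)\<inverse>)\<^sup>*}"

definition delta :: "(nat \<Rightarrow> nat \<Rightarrow> complex) \<Rightarrow> nat \<Rightarrow> real" where
  "delta \<rho> j = Re (\<rho> j j)"

definition delta_pow :: "nat \<Rightarrow> (nat \<Rightarrow> nat \<Rightarrow> complex) \<Rightarrow> nat list \<Rightarrow> real" where
  "delta_pow n \<rho> xs = (\<Prod>i<n. delta \<rho> (xs ! i))"

text \<open>H_max(X|Y)_q with X the identity on Omega and Y a function of X.\<close>
definition hmax :: "'a set \<Rightarrow> ('a \<Rightarrow> real) \<Rightarrow> ('a \<Rightarrow> 'b) \<Rightarrow> real" where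
  "hmax \<Omega> q Y = Max {log 2 (real (card {x\<in>\<Omega>. q x > 0 \<and> Y x = y})) | y. \<exists>x\<in>\<Omega>. q x > 0 \<and> Y x = y}"

definition Vset :: "'a set \<Rightarrow> ('a \<Rightarrow> real) \<Rightarrow> real \<Rightarrow> ('a \<Rightarrow> real) set" where
  "Vset \<Omega> p \<epsilon> =
     {q. \<exists>I\<subseteq>\<Omega>. (\<Sum>i\<in>I. p i) > 0 \<and> q = (\<lambda>x. if x \<in> I then p x / (\<Sum>i\<in>I. p i) else 0)}
     \<inter> {q. (\<Sum>x\<in>\<Omega>. \<bar>q x - p x\<bar>) \<le> \<epsilon>}"

definition htilde :: "'a set \<Rightarrow> ('a \<Rightarrow> real) \<Rightarrow> ('a \<Rightarrow> 'b) \<Rightarrow> real \<Rightarrow> real" where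
  "htilde \<Omega> p Y \<epsilon> = Min ((\<lambda>q. hmax \<Omega> q Y) ` Vset \<Omega> p \<epsilon>)"

end

theory Submission
  imports Defs "HOL-Analysis.Convex"
begin

lemma vnorm_nonneg: "vnorm B v \<ge> 0"
  unfolding vnorm_def by (simp add: sum_nonneg)

lemma vnorm_sq: "(vnorm B v)^2 = (\<Sum>i\<in>B. (cmod (v i))^2)"
  unfolding vnorm_def by (simp add: sum_nonneg)

lemma cs_real:
  fixes a b :: "'a \<Rightarrow> real"
  shows "(\<Sum>i\<in>I. a i * b i) \<le> sqrt (\<Sum>i\<in>I. (a i)^2) * sqrt (\<Sum>i\<in>I. (b i)^2)"
proof -
  have "(\<Sum>i\<in>I. a i * b i)^2 \<le> (\<Sum>i\<in>I. (a i)^2) * (\<Sum>i\<in>I. (b i)^2)"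
    by (rule Cauchy_Schwarz_ineq_sum)
  then have "(\<Sum>i\<in>I. a i * b i) \<le> sqrt ((\<Sum>i\<in>I. (a i)^2) * (\<Sum>i\<in>I. (b i)^2))"
    by (rule real_le_rsqrt)
  then show ?thesis by (simp add: real_sqrt_mult)
qed

lemma cs_complex:
  "cmod (\<Sum>i\<in>B. u i * w i) \<le> vnorm B u * vnorm B w"
proof -
  have "cmod (\<Sum>i\<in>B. u i * w i) \<le> (\<Sum>i\<in>B. cmod (u i) * cmod (w i))"
    by (metis (no_types, lifting) norm_mult norm_sum sum.cong)
  also have "\<dots> \<le> vnorm B u * vnorm B w"
    unfolding vnorm_def by (rule cs_real)
  finally show ?thesis .
qed

lemma vnorm_cnj: "vnorm B (\<lambda>i. cnj (u i)) = vnorm B u"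
  unfolding vnorm_def by simp

lemma row_bound:
  "cmod (\<Sum>j\<in>B. M i j * v j) \<le> sqrt (\<Sum>j\<in>B. (cmod (M i j))^2) * vnorm B v"
  using cs_complex[where B=B and u="M i" and w=v] unfolding vnorm_def by simp

lemma mvec_frob:
  assumes "finite B"
  shows "vnorm B (mvec B M v) \<le> sqrt (\<Sum>i\<in>B. \<Sum>j\<in>B. (cmod (M i j))^2) * vnorm B v"
proof -
  have "(\<Sum>i\<in>B. (cmod (mvec B M v i))^2) \<le> (\<Sum>i\<in>B. (\<Sum>j\<in>B. (cmod (M i j))^2) * (vnorm B v)^2)"
  proof (rule sum_mono)
    fix i assume "i \<in> B"
    have "cmod (mvec B M v i) \<le> sqrt (\<Sum>j\<in>B. (cmod (M i j))^2) * vnorm B v"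
      unfolding mvec_def by (rule row_bound)
    then have "(cmod (mvec B M v i))^2 \<le> (sqrt (\<Sum>j\<in>B. (cmod (M i j))^2) * vnorm B v)^2"
      by (simp add: power_mono)
    also have "\<dots> = (\<Sum>j\<in>B. (cmod (M i j))^2) * (vnorm B v)^2"
      by (simp add: power_mult_distrib sum_nonneg)
    finally show "(cmod (mvec B M v i))^2 \<le> (\<Sum>j\<in>B. (cmod (M i j))^2) * (vnorm B v)^2" .
  qed
  also have "\<dots> = (\<Sum>i\<in>B. \<Sum>j\<in>B. (cmod (M i j))^2) * (vnorm B v)^2"
    by (simp add: sum_distrib_right)
  finally have "(vnorm B (mvec B M v))^2 \<le> (sqrt (\<Sum>i\<in>B. \<Sum>j\<in>B. (cmod (M i j))^2) * vnorm B v)^2"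
    by (simp add: vnorm_sq power_mult_distrib sum_nonneg)
  then show ?thesis
    by (meson mult_nonneg_nonneg power2_le_imp_le real_sqrt_ge_zero sum_nonneg vnorm_nonneg zero_le_power2)
qed

lemma opnorm_bdd:
  assumes "finite B"
  shows "bdd_above {vnorm B (mvec B M v) | v. vnorm B v = 1}"
proof (rule bdd_aboveI[where M="sqrt (\<Sum>i\<in>B. \<Sum>j\<in>B. (cmod (M i j))^2)"])
  fix x assume "x \<in> {vnorm B (mvec B M v) | v. vnorm B v = 1}"
  then obtain v where "x = vnorm B (mvec B M v)" "vnorm B v = 1" by blast
  then show "x \<le> sqrt (\<Sum>i\<in>B. \<Sum>j\<in>B. (cmod (M i j))^2)"
    using mvec_frob[OF assms, of M v] by simp
qed

lemma opnorm_upper: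
  assumes "finite B" "vnorm B v = 1"
  shows "vnorm B (mvec B M v) \<le> opnorm B M"
  unfolding opnorm_def using assms by (auto intro!: cSup_upper opnorm_bdd)

lemma ex_unit:
  assumes "b \<in> B" "finite B"
  shows "vnorm B (\<lambda>i. if i = b then 1 else 0) = 1"
proof -
  have "(\<Sum>i\<in>B. (cmod (if i = b then 1 else 0::complex))^2) = (\<Sum>i\<in>B. if i = b then 1 else 0)"
    by (rule sum.cong) auto
  also have "\<dots> = 1" using assms by simp
  finally show ?thesis unfolding vnorm_def by simp
qed

lemma opnorm_least:
  assumes "finite B" "B \<noteq> {}" "\<And>v. vnorm B v = 1 \<Longrightarrow> vnorm B (mvec B M v) \<le> r"
  shows "opnorm B M \<le> r"
proof -
  obtain b where "b \<in> B" using assms by auto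
  then have "{vnorm B (mvec B M v) | v. vnorm B v = 1} \<noteq> {}"
    using ex_unit[OF _ assms(1)] by blast
  then show ?thesis unfolding opnorm_def using assms(3) by (auto intro!: cSup_least)
qed

lemma vnorm_scale: "vnorm B (\<lambda>i. c * v i) = cmod c * vnorm B v"
proof -
  have "(\<Sum>i\<in>B. (cmod (c * v i))^2) = (cmod c)^2 * (\<Sum>i\<in>B. (cmod (v i))^2)"
    by (simp add: norm_mult power_mult_distrib sum_distrib_left)
  then show ?thesis unfolding vnorm_def by (simp add: real_sqrt_mult)
qed

lemma vnorm_zero_imp:
  assumes "finite B" "vnorm B v = 0" "i \<in> B"
  shows "v i = 0"
proof -
  have "(\<Sum>i\<in>B. (cmod (v i))^2) = 0" using assms(2) unfolding vnorm_def by simp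
  then have "\<forall>i\<in>B. (cmod (v i))^2 = 0" using assms(1) by (simp add: sum_nonneg_eq_0_iff)
  then show ?thesis using assms(3) by simp
qed

lemma opnorm_bound:
  assumes "finite B"
  shows "vnorm B (mvec B M v) \<le> opnorm B M * vnorm B v"
proof (cases "vnorm B v = 0")
  case True
  then have "\<forall>j\<in>B. v j = 0" using vnorm_zero_imp[OF assms] by blast
  then have "mvec B M v = (\<lambda>i. 0)" unfolding mvec_def by (auto intro!: ext)
  then show ?thesis using True by (simp add: vnorm_def)
next
  case False
  define c where "c = vnorm B v"
  have cpos: "c > 0" using False vnorm_nonneg c_def by (metis less_eq_real_def)
  define w where "w = (\<lambda>i. complex_of_real (1/c) * v i)"
  have "vnorm B w = 1" unfolding w_def vnorm_scale using cpos c_def by (simp add: norm_divide)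
  then have "vnorm B (mvec B M w) \<le> opnorm B M" by (rule opnorm_upper[OF assms])
  moreover have "mvec B M w = (\<lambda>i. complex_of_real (1/c) * mvec B M v i)"
    unfolding w_def mvec_def by (auto simp: sum_distrib_left ac_simps intro!: ext)
  then have "vnorm B (mvec B M w) = (1/c) * vnorm B (mvec B M v)"
    using cpos by (simp only: vnorm_scale) (simp add: norm_divide)
  ultimately have "(1/c) * vnorm B (mvec B M v) \<le> opnorm B M"
    by simp
  then show ?thesis using cpos c_def by (simp add: field_simps)
qed

lemma schur_test:
  assumes fin: "finite B" and r: "r \<ge> 0"
    and rows: "\<And>i. i\<in>B \<Longrightarrow> (\<Sum>j\<in>B. cmod (M i j)) \<le> r"
    and cols: "\<And>j. j\<in>B \<Longrightarrow> (\<Sum>i\<in>B. cmod (M i j)) \<le> r"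
  shows "vnorm B (mvec B M v) \<le> r * vnorm B v"
proof -
  have row: "(cmod (mvec B M v i))^2 \<le> r * (\<Sum>j\<in>B. cmod (M i j) * (cmod (v j))^2)" if i: "i \<in> B" for i
  proof -
    have "cmod (mvec B M v i) \<le> (\<Sum>j\<in>B. cmod (M i j) * cmod (v j))"
      unfolding mvec_def by (metis (no_types, lifting) norm_mult norm_sum sum.cong)
    also have "\<dots> = (\<Sum>j\<in>B. sqrt (cmod (M i j)) * (sqrt (cmod (M i j)) * cmod (v j)))"
      proof (rule sum.cong)
      fix j show "cmod (M i j) * cmod (v j) = sqrt (cmod (M i j)) * (sqrt (cmod (M i j)) * cmod (v j))"
        by (simp add: mult.assoc[symmetric])
    qed simp
    also have "\<dots> \<le> sqrt (\<Sum>j\<in>B. (sqrt (cmod (M i j)))^2) * sqrt (\<Sum>j\<in>B. (sqrt (cmod (M i j)) * cmod (v j))^2)"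
      by (rule cs_real)
    also have "\<dots> = sqrt (\<Sum>j\<in>B. cmod (M i j)) * sqrt (\<Sum>j\<in>B. cmod (M i j) * (cmod (v j))^2)"
      by (simp add: power_mult_distrib)
    finally have h: "cmod (mvec B M v i) \<le> sqrt (\<Sum>j\<in>B. cmod (M i j)) * sqrt (\<Sum>j\<in>B. cmod (M i j) * (cmod (v j))^2)" .
    have "(cmod (mvec B M v i))^2 \<le> (sqrt (\<Sum>j\<in>B. cmod (M i j)) * sqrt (\<Sum>j\<in>B. cmod (M i j) * (cmod (v j))^2))^2"
      using h by (simp add: power_mono)
    also have "\<dots> = (\<Sum>j\<in>B. cmod (M i j)) * (\<Sum>j\<in>B. cmod (M i j) * (cmod (v j))^2)"
      by (simp add: power_mult_distrib sum_nonneg)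
    also have "\<dots> \<le> r * (\<Sum>j\<in>B. cmod (M i j) * (cmod (v j))^2)"
      by (rule mult_right_mono[OF rows[OF i]]) (simp add: sum_nonneg)
    finally show ?thesis .
  qed
  have "(vnorm B (mvec B M v))^2 = (\<Sum>i\<in>B. (cmod (mvec B M v i))^2)" by (rule vnorm_sq)
  also have "\<dots> \<le> (\<Sum>i\<in>B. r * (\<Sum>j\<in>B. cmod (M i j) * (cmod (v j))^2))"
    by (rule sum_mono) (rule row)
  also have "\<dots> = r * (\<Sum>j\<in>B. (\<Sum>i\<in>B. cmod (M i j)) * (cmod (v j))^2)"
    unfolding sum_distrib_left sum_distrib_right
    by (subst sum.swap) (simp add: ac_simps)
  also have "\<dots> \<le> r * (\<Sum>j\<in>B. r * (cmod (v j))^2)"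
    by (rule mult_left_mono[OF _ r], rule sum_mono, rule mult_right_mono[OF cols]) auto
  also have "\<dots> = (r * vnorm B v)^2"
    unfolding power_mult_distrib vnorm_sq by (simp add: sum_distrib_left power2_eq_square mult.assoc)
  finally show ?thesis
    using power2_le_imp_le[of "vnorm B (mvec B M v)" "r * vnorm B v"] r vnorm_nonneg[of B v] by simp
qed

lemma opnorm_schur:
  assumes "finite B" "B \<noteq> {}" "r \<ge> 0"
    and "\<And>i. i\<in>B \<Longrightarrow> (\<Sum>j\<in>B. cmod (M i j)) \<le> r"
    and "\<And>j. j\<in>B \<Longrightarrow> (\<Sum>i\<in>B. cmod (M i j)) \<le> r"
  shows "opnorm B M \<le> r"
proof (rule opnorm_least[OF assms(1,2)])
  fix v :: "'a \<Rightarrow> complex" assume "vnorm B v = 1"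
  then show "vnorm B (mvec B M v) \<le> r"
    using schur_test[of B r M v] assms by simp
qed

definition qf :: "'i set \<Rightarrow> ('i \<Rightarrow> 'i \<Rightarrow> complex) \<Rightarrow> ('i \<Rightarrow> complex) \<Rightarrow> complex" where
  "qf B A v = (\<Sum>i\<in>B. \<Sum>j\<in>B. cnj (v i) * A i j * v j)"

definition herm :: "'i set \<Rightarrow> ('i \<Rightarrow> 'i \<Rightarrow> complex) \<Rightarrow> bool" where
  "herm B A = (\<forall>i\<in>B. \<forall>j\<in>B. A i j = cnj (A j i))"

definition psd :: "'i set \<Rightarrow> ('i \<Rightarrow> 'i \<Rightarrow> complex) \<Rightarrow> bool" where
  "psd B A = (\<forall>v. Re (qf B A v) \<ge> 0)"

lemma qf_insert:
  assumes "finite B" "a \<notin> B"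
  shows "qf (insert a B) A w = cnj (w a) * A a a * w a + cnj (w a) * (\<Sum>j\<in>B. A a j * w j)
     + (\<Sum>i\<in>B. cnj (w i) * A i a) * w a + qf B A w"
  proof -
  have "qf (insert a B) A w = (\<Sum>j\<in>insert a B. cnj (w a) * A a j * w j) + (\<Sum>i\<in>B. \<Sum>j\<in>insert a B. cnj (w i) * A i j * w j)"
    using assms unfolding qf_def by simp
  also have "\<dots> = cnj (w a) * A a a * w a + (\<Sum>j\<in>B. cnj (w a) * A a j * w j) + ((\<Sum>i\<in>B. cnj (w i) * A i a * w a) + qf B A w)"
    using assms unfolding qf_def by (simp add: sum.distrib)
  also have "\<dots> = cnj (w a) * A a a * w a + cnj (w a) * (\<Sum>j\<in>B. A a j * w j)
     + (\<Sum>i\<in>B. cnj (w i) * A i a) * w a + qf B A w"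
    by (simp add: sum_distrib_left sum_distrib_right mult.assoc)
  finally show ?thesis .
qed

lemma qf_supp:
  assumes "finite B" "S \<subseteq> B" "\<And>i. i \<notin> S \<Longrightarrow> v i = 0"
  shows "qf B A v = qf S A v"
proof -
  have fS: "finite S" using assms finite_subset by blast
  have "qf B A v = (\<Sum>i\<in>S. \<Sum>j\<in>B. cnj (v i) * A i j * v j)"
    unfolding qf_def by (rule sum.mono_neutral_right[OF assms(1,2)]) (auto simp: assms(3))
  also have "\<dots> = qf S A v"
    unfolding qf_def
    by (rule sum.cong[OF refl], rule sum.mono_neutral_right[OF assms(1,2)]) (auto simp: assms(3))
  finally show ?thesis .
qed

lemma herm_diag_real:
  assumes "herm B A" "a \<in> B"
  shows "A a a = complex_of_real (Re (A a a))"
proof -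
  have "A a a = cnj (A a a)" using assms unfolding herm_def by blast
  then have "Im (A a a) = Im (cnj (A a a))" by simp
  then have "Im (A a a) = 0" by simp
  then show ?thesis by (simp add: complex_eq_iff)
qed

lemma psd_diag:
  assumes "finite B" "psd B A" "a \<in> B"
  shows "Re (A a a) \<ge> 0"
proof -
  define v where "v = (\<lambda>i. if i = a then (1::complex) else 0)"
  have "qf B A v = qf {a} A v" by (rule qf_supp) (use assms in \<open>auto simp: v_def\<close>)
  also have "\<dots> = A a a" by (simp add: qf_def v_def)
  finally show ?thesis using assms(2) unfolding psd_def by metis
qed


lemma psd_zero_row:
  assumes "finite B" "herm B A" "psd B A" "a \<in> B" "j \<in> B" "a \<noteq> j" "A a a = 0"
  shows "A a j = 0"
proof (rule ccontr)
  assume nz: "A a j \<noteq> 0"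
  define m where "m = (cmod (A a j))^2"
  have mpos: "m > 0" using nz by (simp add: m_def)
  define t where "t = (\<bar>Re (A j j)\<bar> + 1) / m"
  define c where "c = - complex_of_real t * A a j"
  define v where "v = (\<lambda>i. if i = a then c else if i = j then 1 else 0)"
  have "qf B A v = qf {a, j} A v" by (rule qf_supp) (use assms in \<open>auto simp: v_def\<close>)
  also have "\<dots> = cnj c * A a a * c + cnj c * A a j + A j a * c + A j j"
    using assms(6) by (simp add: qf_def v_def)
  also have "\<dots> = cnj c * A a j + A j a * c + A j j"
    using assms(7) by simp
  finally have q0: "qf B A v = cnj c * A a j + A j a * c + A j j" .
  have hja: "A j a = cnj (A a j)" using assms(2,4,5) unfolding herm_def by blast
  have cc: "cnj (A a j) * A a j = complex_of_real m"
    unfolding m_def by (subst complex_norm_square) (simp add: mult.commute)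
  have "cnj c * A a j = - complex_of_real t * complex_of_real m"
    unfolding c_def using cc by (simp add: mult.assoc)
  moreover have "A j a * c = - complex_of_real t * complex_of_real m"
    unfolding c_def hja using cc by (simp add: algebra_simps)
  ultimately have "Re (qf B A v) = - 2 * t * m + Re (A j j)"
    using q0 by simp
  also have "\<dots> = - 2 * (\<bar>Re (A j j)\<bar> + 1) + Re (A j j)"
    using mpos by (simp add: t_def)
  also have "\<dots> < 0" by (cases "Re (A j j) \<ge> 0") auto
  finally show False using assms(3) unfolding psd_def by (metis not_le)
qed
lemma sum_cnj_herm:
  assumes "herm (insert a B) A" "a \<notin> B"
  shows "(\<Sum>i\<in>B. cnj (v i) * A i a) = cnj (\<Sum>j\<in>B. A a j * v j)"
proof -
  have "(\<Sum>i\<in>B. cnj (v i) * A i a) = (\<Sum>i\<in>B. cnj (A a i * v i))"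
  proof (rule sum.cong[OF refl])
    fix i assume "i \<in> B"
    then have "A i a = cnj (A a i)" using assms unfolding herm_def by blast
    then show "cnj (v i) * A i a = cnj (A a i * v i)" by (simp add: mult.commute)
  qed
  then show ?thesis by (simp add: cnj_sum)
qed

lemma qf_rank1:
  "qf B (\<lambda>i j. A i j - cnj (u i) * u j) v = qf B A v - cnj (\<Sum>j\<in>B. u j * v j) * (\<Sum>j\<in>B. u j * v j)"
proof -
  have "qf B (\<lambda>i j. A i j - cnj (u i) * u j) v = qf B A v - (\<Sum>i\<in>B. \<Sum>j\<in>B. cnj (u i * v i) * (u j * v j))"
    unfolding qf_def by (simp add: algebra_simps sum_subtractf)
  also have "(\<Sum>i\<in>B. \<Sum>j\<in>B. cnj (u i * v i) * (u j * v j)) = cnj (\<Sum>j\<in>B. u j * v j) * (\<Sum>j\<in>B. u j * v j)"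
    by (simp add: cnj_sum sum_product)
  finally show ?thesis .
qed


lemma gram_exists:
  assumes "finite B"
  shows "herm B A \<Longrightarrow> psd B A \<Longrightarrow> \<exists>L. \<forall>i\<in>B. \<forall>j\<in>B. A i j = (\<Sum>r\<in>B. cnj (L r i) * L r j)"
  using assms
proof (induction B arbitrary: A rule: finite_induct)
  case empty
  then show ?case by simp
next
  case (insert a B A)
  have finC: "finite (insert a B)" using insert by simp
  define \<alpha> where "\<alpha> = Re (A a a)"
  have \<alpha>0: "\<alpha> \<ge> 0" unfolding \<alpha>_def by (rule psd_diag[OF finC insert.prems(2)]) simp
  have Aaa: "A a a = complex_of_real \<alpha>" unfolding \<alpha>_def by (rule herm_diag_real[OF insert.prems(1)]) simp
  define u where "u j = (if \<alpha> > 0 then A a j / complex_of_real (sqrt \<alpha>) else 0)" for j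
  define A' where "A' i j = A i j - cnj (u i) * u j" for i j
  have zero_row: "A a j = 0" if "\<alpha> = 0" "j \<in> B" for j
    using psd_zero_row[OF finC insert.prems(1) insert.prems(2), of a j] that insert.hyps(2) Aaa
    by auto
  have hermA: "A i j = cnj (A j i)" if "i \<in> insert a B" "j \<in> insert a B" for i j
    using insert.prems(1) that unfolding herm_def by blast
  have herm': "herm B A'"
    unfolding herm_def A'_def
  proof (intro ballI)
    fix i j assume "i \<in> B" "j \<in> B"
    then have "A i j = cnj (A j i)" using hermA by blast
    then show "A i j - cnj (u i) * u j = cnj (A j i - cnj (u j) * u i)" by (simp add: mult.commute)
  qed
  have psd': "psd B A'"
    unfolding psd_def
  proof
    fix v
    define S where "S = (\<Sum>j\<in>B. u j * v j)"
    define s where "s = (\<Sum>j\<in>B. A a j * v j)"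
    have eq: "qf B A' v = qf B A v - cnj S * S"
      unfolding A'_def S_def by (rule qf_rank1)
    show "Re (qf B A' v) \<ge> 0"
    proof (cases "\<alpha> > 0")
      case True
      define c where "c = - s / complex_of_real \<alpha>"
      define w where "w = v(a := c)"
      have wB: "(\<Sum>j\<in>B. A a j * w j) = s" unfolding s_def w_def
        using insert.hyps(2) by (intro sum.cong) auto
      have wB2: "qf B A w = qf B A v" unfolding qf_def w_def
        using insert.hyps(2) by (intro sum.cong refl) auto
      have wB3: "(\<Sum>i\<in>B. cnj (w i) * A i a) = cnj s"
        using sum_cnj_herm[OF insert.prems(1) insert.hyps(2), of w] wB by simp
      have "qf (insert a B) A w = cnj c * A a a * c + cnj c * s + cnj s * c + qf B A v"
        using qf_insert[OF insert.hyps(1,2), of A w] wB wB2 wB3 by (simp add: w_def)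
      also have "\<dots> = qf B A v - cnj s * s / complex_of_real \<alpha>"
        using True unfolding c_def Aaa by (simp add: field_simps)
      finally have q1: "qf (insert a B) A w = qf B A v - cnj s * s / complex_of_real \<alpha>" .
      have "S = s / complex_of_real (sqrt \<alpha>)"
        unfolding S_def s_def u_def using True by (simp add: sum_divide_distrib)
      then have "cnj S * S = cnj s * s / (complex_of_real (sqrt \<alpha>) * complex_of_real (sqrt \<alpha>))"
        by simp
      also have "complex_of_real (sqrt \<alpha>) * complex_of_real (sqrt \<alpha>) = complex_of_real \<alpha>"
        using True by (simp flip: of_real_mult)
      finally have "cnj S * S = cnj s * s / complex_of_real \<alpha>" .
      then have "qf B A' v = qf (insert a B) A w" using eq q1 by simp
      then show ?thesis using insert.prems(2) unfolding psd_def by simp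
    next
      case False
      then have a0: "\<alpha> = 0" using \<alpha>0 by simp
      define w where "w = v(a := 0)"
      have wB: "(\<Sum>j\<in>B. A a j * w j) = 0" using zero_row[OF a0] by simp
      have wB2: "qf B A w = qf B A v" unfolding qf_def w_def
        using insert.hyps(2) by (intro sum.cong refl) auto
      have "qf (insert a B) A w = qf B A v"
        using qf_insert[OF insert.hyps(1,2), of A w] wB wB2 by (simp add: w_def)
      moreover have "S = 0" unfolding S_def u_def using False by simp
      ultimately have "qf B A' v = qf (insert a B) A w" using eq by simp
      then show ?thesis using insert.prems(2) unfolding psd_def by simp
    qed
  qed
  obtain L' where L': "\<forall>i\<in>B. \<forall>j\<in>B. A' i j = (\<Sum>r\<in>B. cnj (L' r i) * L' r j)"
    using insert.IH[OF herm' psd'] by blast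
  define L where "L r j = (if r = a then u j else if j = a then 0 else L' r j)" for r j
  have sumL: "(\<Sum>r\<in>insert a B. cnj (L r i) * L r j) = cnj (u i) * u j + (\<Sum>r\<in>B. cnj (L r i) * L r j)" for i j
    using insert.hyps by (simp add: L_def)
  have ua: "cnj (u a) * u j = A a j" if "j \<in> insert a B" for j
  proof (cases "\<alpha> > 0")
    case True
    then show ?thesis unfolding u_def Aaa
      by (simp add: field_simps flip: of_real_mult)
  next
    case False
    then have "\<alpha> = 0" using \<alpha>0 by simp
    then show ?thesis using zero_row that Aaa unfolding u_def by auto
  qed
  have "\<forall>i\<in>insert a B. \<forall>j\<in>insert a B. A i j = (\<Sum>r\<in>insert a B. cnj (L r i) * L r j)"
  proof (intro ballI)
    fix i j assume i: "i \<in> insert a B" and j: "j \<in> insert a B"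
    show "A i j = (\<Sum>r\<in>insert a B. cnj (L r i) * L r j)"
    proof (cases "i = a")
      case True
      have "(\<Sum>r\<in>B. cnj (L r i) * L r j) = 0" using True insert.hyps(2) by (intro sum.neutral) (auto simp: L_def)
      then show ?thesis using sumL ua[OF j] True by simp
    next
      case iF: False
      show ?thesis
      proof (cases "j = a")
        case True
        have "(\<Sum>r\<in>B. cnj (L r i) * L r j) = 0" using True insert.hyps(2) by (intro sum.neutral) (auto simp: L_def)
        moreover have "cnj (u i) * u j = A i j"
          proof -
          have "A a i = cnj (u a) * u i" using ua[OF i] by simp
          then have "cnj (A a i) = u a * cnj (u i)" by simp
          then show ?thesis using hermA[OF i j] True by (simp add: mult.commute)
        qed
        ultimately show ?thesis using sumL by simp
      next
        case False
        have iB: "i \<in> B" and jB: "j \<in> B" using i j iF False by auto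
        have "(\<Sum>r\<in>B. cnj (L r i) * L r j) = (\<Sum>r\<in>B. cnj (L' r i) * L' r j)"
          using insert.hyps(2) iF False by (intro sum.cong) (auto simp: L_def)
        also have "\<dots> = A' i j" using L' iB jB by simp
        finally show ?thesis using sumL A'_def by simp
      qed
    qed
  qed
  then show ?case by blast
qed

lemma cnj_mult_self: "cnj z * z = complex_of_real ((cmod z)^2)"
  by (subst complex_norm_square) (simp add: mult.commute)

lemma finite_tuples: "finite (tuples d n)"
proof -
  have "tuples d n = {xs. set xs \<subseteq> {0..<d} \<and> length xs = n}" unfolding tuples_def by auto
  then show ?thesis using finite_lists_length_eq[of "{0..<d}" n] by simp
qed

lemma tuples_Suc: "tuples d (Suc n) = (\<lambda>(a, xs). a # xs) ` ({0..<d} \<times> tuples d n)"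
proof
  show "tuples d (Suc n) \<subseteq> (\<lambda>(a, xs). a # xs) ` ({0..<d} \<times> tuples d n)"
  proof
    fix ys assume "ys \<in> tuples d (Suc n)"
    then obtain a xs where "ys = a # xs" "length xs = n" "a < d" "set xs \<subseteq> {0..<d}"
      unfolding tuples_def by (cases ys) auto
    then show "ys \<in> (\<lambda>(a, xs). a # xs) ` ({0..<d} \<times> tuples d n)"
      unfolding tuples_def by force
  qed
next
  show "(\<lambda>(a, xs). a # xs) ` ({0..<d} \<times> tuples d n) \<subseteq> tuples d (Suc n)"
    unfolding tuples_def by auto
qed

lemma sum_tuples_Suc:
  "(\<Sum>ys\<in>tuples d (Suc n). g ys) = (\<Sum>a<d. \<Sum>xs\<in>tuples d n. g (a # xs))"
proof -
  have inj: "inj_on (\<lambda>(a, xs). a # xs) ({0..<d} \<times> tuples d n)"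
    by (auto simp: inj_on_def)
  have "(\<Sum>ys\<in>tuples d (Suc n). g ys) = (\<Sum>p\<in>{0..<d} \<times> tuples d n. g (fst p # snd p))"
    unfolding tuples_Suc by (subst sum.reindex[OF inj]) (simp add: case_prod_beta)
  also have "\<dots> = (\<Sum>a\<in>{0..<d}. \<Sum>xs\<in>tuples d n. g (a # xs))"
    by (subst sum.cartesian_product) (simp add: case_prod_beta)
  finally show ?thesis by (simp add: lessThan_atLeast0)
qed

lemma prod_sum_tuples:
  fixes f :: "nat \<Rightarrow> nat \<Rightarrow> 'a::comm_semiring_1"
  shows "(\<Prod>i<n. \<Sum>a<d. f i a) = (\<Sum>xs\<in>tuples d n. \<Prod>i<n. f i (xs ! i))"
proof (induction n arbitrary: f)
  case 0
  have "tuples d 0 = {[]}" unfolding tuples_def by auto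
  then show ?case by simp
next
  case (Suc n)
  have "(\<Prod>i<Suc n. \<Sum>a<d. f i a) = (\<Sum>a<d. f 0 a) * (\<Prod>i<n. \<Sum>a<d. f (Suc i) a)"
    by (rule prod.lessThan_Suc_shift)
  also have "\<dots> = (\<Sum>a<d. f 0 a) * (\<Sum>xs\<in>tuples d n. \<Prod>i<n. f (Suc i) (xs ! i))"
    using Suc.IH[of "\<lambda>i. f (Suc i)"] by simp
  also have "\<dots> = (\<Sum>a<d. \<Sum>xs\<in>tuples d n. f 0 a * (\<Prod>i<n. f (Suc i) (xs ! i)))"
    by (simp add: sum_product)
  also have "\<dots> = (\<Sum>a<d. \<Sum>xs\<in>tuples d n. \<Prod>i<Suc n. f i ((a # xs) ! i))"
    by (simp only: prod.lessThan_Suc_shift nth_Cons_0 nth_Cons_Suc)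
  also have "\<dots> = (\<Sum>ys\<in>tuples d (Suc n). \<Prod>i<Suc n. f i (ys ! i))"
    by (rule sum_tuples_Suc[symmetric])
  finally show ?case .
qed

lemma tuples_nth: "xs \<in> tuples d n \<Longrightarrow> i < n \<Longrightarrow> xs ! i < d"
  unfolding tuples_def using nth_mem by fastforce

lemma qf_gram:
  assumes "finite R"
  shows "qf B (\<lambda>x y. \<Sum>r\<in>R. cnj (G r x) * G r y) v
     = (\<Sum>r\<in>R. cnj (\<Sum>x\<in>B. G r x * v x) * (\<Sum>y\<in>B. G r y * v y))"
proof -
  have "qf B (\<lambda>x y. \<Sum>r\<in>R. cnj (G r x) * G r y) v
      = (\<Sum>x\<in>B. \<Sum>y\<in>B. \<Sum>r\<in>R. cnj (G r x * v x) * (G r y * v y))"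
    unfolding qf_def by (simp add: sum_distrib_left sum_distrib_right ac_simps)
  also have "\<dots> = (\<Sum>r\<in>R. \<Sum>x\<in>B. \<Sum>y\<in>B. cnj (G r x * v x) * (G r y * v y))"
    by (simp add: sum.swap[of _ R])
  also have "\<dots> = (\<Sum>r\<in>R. cnj (\<Sum>x\<in>B. G r x * v x) * (\<Sum>y\<in>B. G r y * v y))"
    by (simp add: cnj_sum sum_product)
  finally show ?thesis .
qed

lemma gram_psd:
  assumes "finite R" "\<forall>x\<in>B. \<forall>y\<in>B. A x y = (\<Sum>r\<in>R. cnj (G r x) * G r y)"
  shows "psd B A"
  unfolding psd_def
proof
  fix v
  have "qf B A v = qf B (\<lambda>x y. \<Sum>r\<in>R. cnj (G r x) * G r y) v"
    unfolding qf_def using assms(2) by (intro sum.cong refl) auto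
  also have "\<dots> = (\<Sum>r\<in>R. cnj (\<Sum>x\<in>B. G r x * v x) * (\<Sum>y\<in>B. G r y * v y))"
    by (rule qf_gram[OF assms(1)])
  also have "\<dots> = (\<Sum>r\<in>R. complex_of_real ((cmod (\<Sum>y\<in>B. G r y * v y))^2))"
    by (simp only: cnj_mult_self)
  finally have "Re (qf B A v) = (\<Sum>r\<in>R. (cmod (\<Sum>y\<in>B. G r y * v y))^2)"
    by (simp only: of_real_sum[symmetric] Re_complex_of_real)
  then show "Re (qf B A v) \<ge> 0" by (simp add: sum_nonneg)
qed

lemma gram_herm:
  assumes "\<forall>x\<in>B. \<forall>y\<in>B. A x y = (\<Sum>r\<in>R. cnj (G r x) * G r y)"
  shows "herm B A"
  unfolding herm_def using assms by (simp add: cnj_sum mult.commute)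

lemma gram_diag:
  assumes "\<forall>x\<in>B. \<forall>y\<in>B. A x y = (\<Sum>r\<in>R. cnj (G r x) * G r y)" "x \<in> B"
  shows "A x x = complex_of_real (\<Sum>r\<in>R. (cmod (G r x))^2)"
  using assms by (simp add: cnj_mult_self)

lemma gram_cs:
  assumes "\<forall>x\<in>B. \<forall>y\<in>B. A x y = (\<Sum>r\<in>R. cnj (G r x) * G r y)" "x \<in> B" "y \<in> B"
  shows "cmod (A x y) \<le> sqrt (Re (A x x) * Re (A y y))"
proof -
  have "cmod (A x y) = cmod (\<Sum>r\<in>R. cnj (G r x) * G r y)" using assms by simp
  also have "\<dots> \<le> vnorm R (\<lambda>r. cnj (G r x)) * vnorm R (\<lambda>r. G r y)" by (rule cs_complex)
  also have "\<dots> = sqrt (Re (A x x)) * sqrt (Re (A y y))"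
    unfolding vnorm_def using gram_diag[OF assms(1,2)] gram_diag[OF assms(1,3)] by simp
  finally show ?thesis by (simp add: real_sqrt_mult)
qed

lemma density_herm: "density B \<rho> \<Longrightarrow> herm B \<rho>"
  unfolding density_def herm_def by blast

lemma density_psd: "density B \<rho> \<Longrightarrow> psd B \<rho>"
  unfolding density_def psd_def qf_def by blast

lemma density_trace: "density B \<rho> \<Longrightarrow> (\<Sum>x\<in>B. \<rho> x x) = 1"
  unfolding density_def mtrace_def by blast

lemma rho_gram:
  fixes \<rho> :: "nat \<Rightarrow> nat \<Rightarrow> complex"
  assumes "density {0..<d} \<rho>"
  shows "\<exists>L. \<forall>a\<in>{0..<d}. \<forall>b\<in>{0..<d}. \<rho> a b = (\<Sum>r\<in>{0..<d}. cnj (L r a) * L r b)"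
proof -
  have "finite {0..<d}" by simp
  from gram_exists[OF this density_herm[OF assms] density_psd[OF assms]] show ?thesis .
qed

definition tgram :: "(nat \<Rightarrow> nat \<Rightarrow> complex) \<Rightarrow> nat \<Rightarrow> nat list \<Rightarrow> nat list \<Rightarrow> complex" where
  "tgram L n rs xs = (\<Prod>i<n. L (rs ! i) (xs ! i))"

lemma tensor_gram:
  fixes \<rho> :: "nat \<Rightarrow> nat \<Rightarrow> complex"
  assumes L: "\<forall>a\<in>{0..<d}. \<forall>b\<in>{0..<d}. \<rho> a b = (\<Sum>r\<in>{0..<d}. cnj (L r a) * L r b)"
  shows "\<forall>xs\<in>tuples d n. \<forall>ys\<in>tuples d n.
     tensor_pow n \<rho> xs ys = (\<Sum>rs\<in>tuples d n. cnj (tgram L n rs xs) * tgram L n rs ys)"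
proof (intro ballI)
  fix xs ys assume xs: "xs \<in> tuples d n" and ys: "ys \<in> tuples d n"
  have "tensor_pow n \<rho> xs ys = (\<Prod>i<n. \<Sum>r<d. cnj (L r (xs ! i)) * L r (ys ! i))"
    unfolding tensor_pow_def
  proof (rule prod.cong[OF refl])
    fix i assume "i \<in> {..<n}"
    then have "xs ! i < d" "ys ! i < d" using tuples_nth xs ys by auto
    then show "\<rho> (xs ! i) (ys ! i) = (\<Sum>r<d. cnj (L r (xs ! i)) * L r (ys ! i))"
      using L by (simp add: lessThan_atLeast0)
  qed
  also have "\<dots> = (\<Sum>rs\<in>tuples d n. \<Prod>i<n. cnj (L (rs ! i) (xs ! i)) * L (rs ! i) (ys ! i))"
    by (rule prod_sum_tuples)
  also have "\<dots> = (\<Sum>rs\<in>tuples d n. cnj (tgram L n rs xs) * tgram L n rs ys)"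
    unfolding tgram_def by (simp add: prod.distrib cnj_prod)
  finally show "tensor_pow n \<rho> xs ys = (\<Sum>rs\<in>tuples d n. cnj (tgram L n rs xs) * tgram L n rs ys)" .
qed

lemma tensor_diag:
  fixes \<rho> :: "nat \<Rightarrow> nat \<Rightarrow> complex"
  assumes "density {0..<d} \<rho>" "xs \<in> tuples d n"
  shows "tensor_pow n \<rho> xs xs = complex_of_real (delta_pow n \<rho> xs)"
proof -
  have "tensor_pow n \<rho> xs xs = (\<Prod>i<n. complex_of_real (delta \<rho> (xs ! i)))"
    unfolding tensor_pow_def delta_def
  proof (rule prod.cong[OF refl])
    fix i assume "i \<in> {..<n}"
    then have "xs ! i \<in> {0..<d}" using tuples_nth assms(2) by auto
    then show "\<rho> (xs ! i) (xs ! i) = complex_of_real (Re (\<rho> (xs ! i) (xs ! i)))"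
      using herm_diag_real[OF density_herm[OF assms(1)]] by blast
  qed
  then show ?thesis unfolding delta_pow_def by simp
qed

lemma delta_nonneg:
  fixes \<rho> :: "nat \<Rightarrow> nat \<Rightarrow> complex"
  assumes "density {0..<d} \<rho>" "a < d"
  shows "delta \<rho> a \<ge> 0"
  unfolding delta_def using psd_diag[OF _ density_psd[OF assms(1)]] assms(2) by simp

lemma delta_pow_nonneg:
  fixes \<rho> :: "nat \<Rightarrow> nat \<Rightarrow> complex"
  assumes "density {0..<d} \<rho>" "xs \<in> tuples d n"
  shows "delta_pow n \<rho> xs \<ge> 0"
  unfolding delta_pow_def using delta_nonneg[OF assms(1)] tuples_nth[OF assms(2)]
  by (intro prod_nonneg) auto

lemma delta_pow_sum:
  fixes \<rho> :: "nat \<Rightarrow> nat \<Rightarrow> complex"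
  assumes "density {0..<d} \<rho>"
  shows "(\<Sum>xs\<in>tuples d n. delta_pow n \<rho> xs) = 1"
proof -
  have "(\<Sum>a<d. delta \<rho> a) = Re (\<Sum>a\<in>{0..<d}. \<rho> a a)"
    unfolding delta_def by (simp add: lessThan_atLeast0)
  also have "\<dots> = 1" using density_trace[OF assms] by simp
  finally have s1: "(\<Sum>a<d. delta \<rho> a) = 1" .
  have "(\<Sum>xs\<in>tuples d n. delta_pow n \<rho> xs) = (\<Prod>i<n. \<Sum>a<d. delta \<rho> a)"
    unfolding delta_pow_def by (rule prod_sum_tuples[symmetric])
  then show ?thesis using s1 by simp
qed

definition ip :: "'i set \<Rightarrow> ('i \<Rightarrow> complex) \<Rightarrow> ('i \<Rightarrow> complex) \<Rightarrow> complex" where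
  "ip B a b = (\<Sum>y\<in>B. cnj (a y) * b y)"

lemma ip_bound:
  assumes "finite B" "opnorm B Y \<le> 1"
  shows "cmod (ip B a (mvec B Y b)) \<le> vnorm B a * vnorm B b"
proof -
  have "cmod (ip B a (mvec B Y b)) \<le> vnorm B (\<lambda>y. cnj (a y)) * vnorm B (mvec B Y b)"
    unfolding ip_def by (rule cs_complex)
  also have "\<dots> \<le> vnorm B a * vnorm B b"
  proof -
    have "vnorm B (mvec B Y b) \<le> opnorm B Y * vnorm B b" by (rule opnorm_bound[OF assms(1)])
    also have "\<dots> \<le> vnorm B b" using mult_right_mono[OF assms(2) vnorm_nonneg[of B b]] by simp
    finally show ?thesis by (simp add: vnorm_cnj mult_left_mono vnorm_nonneg)
  qed
  finally show ?thesis .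
qed

lemma trace_gram:
  assumes "finite R"
  shows "(\<Sum>x\<in>B. \<Sum>y\<in>B. (\<Sum>r\<in>R. cnj (G r x) * G r y) * Y y x)
     = (\<Sum>r\<in>R. ip B (\<lambda>x. cnj (G r x)) (mvec B Y (\<lambda>x. cnj (G r x))))"
proof -
  have "(\<Sum>x\<in>B. \<Sum>y\<in>B. (\<Sum>r\<in>R. cnj (G r x) * G r y) * Y y x)
      = (\<Sum>r\<in>R. \<Sum>x\<in>B. \<Sum>y\<in>B. cnj (G r x) * G r y * Y y x)"
    by (simp add: sum_distrib_right sum.swap[of _ R])
  also have "\<dots> = (\<Sum>r\<in>R. \<Sum>y\<in>B. \<Sum>x\<in>B. G r y * (Y y x * cnj (G r x)))"
    by (subst sum.swap) (simp add: ac_simps)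
  also have "\<dots> = (\<Sum>r\<in>R. ip B (\<lambda>x. cnj (G r x)) (mvec B Y (\<lambda>x. cnj (G r x))))"
    unfolding ip_def mvec_def by (simp add: sum_distrib_left)
  finally show ?thesis .
qed

lemma ip_split:
  assumes "\<And>x. h x = u x + w x"
  shows "ip B h (mvec B Y h) = ip B u (mvec B Y u) + ip B u (mvec B Y w) + ip B w (mvec B Y h)"
proof -
  have m: "mvec B Y h = (\<lambda>y. mvec B Y u y + mvec B Y w y)"
    unfolding mvec_def assms by (simp add: algebra_simps sum.distrib)
  have "ip B h (mvec B Y h) = ip B u (mvec B Y h) + ip B w (mvec B Y h)"
    unfolding ip_def assms by (simp add: algebra_simps sum.distrib)
  also have "ip B u (mvec B Y h) = ip B u (mvec B Y u) + ip B u (mvec B Y w)"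
    unfolding ip_def m by (simp add: algebra_simps sum.distrib)
  finally show ?thesis .
qed

lemma sqrt_bound:
  fixes s :: real
  assumes "0 \<le> s" "s \<le> 1"
  shows "s + sqrt ((1 - s) * s) + sqrt s \<le> sqrt (8 * s)"
proof -
  define a where "a = sqrt s"
  define b where "b = sqrt (1 - s)"
  have a0: "a \<ge> 0" and b0: "b \<ge> 0" using assms by (auto simp: a_def b_def)
  have aa: "a * a = s" and bb: "b * b = 1 - s" using assms by (auto simp: a_def b_def)
  have "(a + b)^2 \<le> 2"
  proof -
    have "(a + b)^2 = 1 + 2 * a * b" using aa bb by (simp add: power2_eq_square algebra_simps)
    moreover have "2 * a * b \<le> a * a + b * b" using sum_squares_bound[of a b] by (simp add: power2_eq_square)
    ultimately show ?thesis using aa bb by simp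
  qed
  then have ab: "a + b \<le> sqrt 2" using a0 b0 by (simp add: real_le_rsqrt)
  have s2: "1 \<le> sqrt (2::real)" by simp
  have "sqrt (8 * s) = 2 * sqrt 2 * a"
  proof -
    have "sqrt (8 * s) = sqrt (4 * 2 * s)" by simp
    also have "\<dots> = 2 * sqrt 2 * a" unfolding a_def by (simp only: real_sqrt_mult) simp
    finally show ?thesis .
  qed
  moreover have "sqrt ((1 - s) * s) = b * a" unfolding a_def b_def by (simp add: real_sqrt_mult)
  moreover have "a * (a + b + 1) \<le> a * (2 * sqrt 2)"
  proof -
    have "a + b + 1 \<le> 2 * sqrt 2" using ab s2 by linarith
    then show ?thesis using a0 by (rule mult_left_mono)
  qed
  moreover have "sqrt s = a" by (simp add: a_def)
  ultimately show ?thesis using aa by (simp add: algebra_simps)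
qed


lemma opnorm_zero:
  assumes "finite B" "B \<noteq> {}"
  shows "opnorm B (\<lambda>_ _. 0) \<le> 1"
proof (rule opnorm_least[OF assms])
  fix v :: "'a \<Rightarrow> complex"
  have "mvec B (\<lambda>_ _. 0) v = (\<lambda>_. 0)" unfolding mvec_def by simp
  then show "vnorm B (mvec B (\<lambda>_ _. 0) v) \<le> 1" by (simp add: vnorm_def)
qed

lemma gentle_trace:
  fixes \<omega> :: "'i \<Rightarrow> 'i \<Rightarrow> complex" and F :: "'r \<Rightarrow> 'i \<Rightarrow> complex"
  assumes finB: "finite B" and finR: "finite R"
    and gram: "\<forall>x\<in>B. \<forall>y\<in>B. \<omega> x y = (\<Sum>r\<in>R. cnj (F r x) * F r y)"
    and tr1: "(\<Sum>x\<in>B. Re (\<omega> x x)) = 1"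
    and I: "I \<subseteq> B" and tdef: "t = (\<Sum>x\<in>I. Re (\<omega> x x))" and tpos: "t > 0"
    and Y: "opnorm B Y \<le> 1"
  shows "cmod (mtrace B (mmul B (\<lambda>x y. (if x \<in> I \<and> y \<in> I then \<omega> x y / complex_of_real t else 0) - \<omega> x y) Y))
     \<le> (1 - t) + sqrt (t * (1 - t)) + sqrt (1 - t)"
proof -
  define h where "h r x = cnj (F r x)" for r x
  define u where "u r x = (if x \<in> I then h r x else 0)" for r x
  define w where "w r x = (if x \<in> I then 0 else h r x)" for r x
  define G where "G r x = (if x \<in> I then F r x else 0)" for r x
  have diag: "Re (\<omega> x x) = (\<Sum>r\<in>R. (cmod (F r x))^2)" if "x \<in> B" for x
    using gram_diag[OF gram that] by simp
  have t1: "t \<le> 1"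
  proof -
    have "t \<le> (\<Sum>x\<in>B. Re (\<omega> x x))" unfolding tdef
      by (rule sum_mono2[OF finB I]) (use diag in \<open>auto intro: sum_nonneg\<close>)
    then show ?thesis using tr1 by simp
  qed
  have trsplit: "mtrace B (mmul B (\<lambda>x y. (if x \<in> I \<and> y \<in> I then \<omega> x y / complex_of_real t else 0) - \<omega> x y) Y)
      = (\<Sum>x\<in>B. \<Sum>y\<in>B. (\<Sum>r\<in>R. cnj (G r x) * G r y) * Y y x) / complex_of_real t
        - (\<Sum>x\<in>B. \<Sum>y\<in>B. (\<Sum>r\<in>R. cnj (F r x) * F r y) * Y y x)"
  proof -
    have "mtrace B (mmul B (\<lambda>x y. (if x \<in> I \<and> y \<in> I then \<omega> x y / complex_of_real t else 0) - \<omega> x y) Y)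
       = (\<Sum>x\<in>B. \<Sum>y\<in>B. ((\<Sum>r\<in>R. cnj (G r x) * G r y) * Y y x) / complex_of_real t
           - (\<Sum>r\<in>R. cnj (F r x) * F r y) * Y y x)"
      unfolding mtrace_def mmul_def
    proof (intro sum.cong refl)
      fix x y assume x: "x \<in> B" and y: "y \<in> B"
      have "(\<Sum>r\<in>R. cnj (G r x) * G r y) = (if x \<in> I \<and> y \<in> I then \<omega> x y else 0)"
        using gram x y unfolding G_def by auto
      then show "((if x \<in> I \<and> y \<in> I then \<omega> x y / complex_of_real t else 0) - \<omega> x y) * Y y x
          = (\<Sum>r\<in>R. cnj (G r x) * G r y) * Y y x / complex_of_real t - (\<Sum>r\<in>R. cnj (F r x) * F r y) * Y y x"
        using gram x y by (simp add: algebra_simps)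
    qed
    also have "\<dots> = (\<Sum>x\<in>B. \<Sum>y\<in>B. (\<Sum>r\<in>R. cnj (G r x) * G r y) * Y y x) / complex_of_real t
        - (\<Sum>x\<in>B. \<Sum>y\<in>B. (\<Sum>r\<in>R. cnj (F r x) * F r y) * Y y x)"
      by (simp add: sum_subtractf sum_divide_distrib)
    finally show ?thesis .
  qed
  have Gu: "(\<lambda>x. cnj (G r x)) = u r" for r unfolding G_def u_def h_def by auto
  have Fh: "(\<lambda>x. cnj (F r x)) = h r" for r unfolding h_def by auto
  have tr: "mtrace B (mmul B (\<lambda>x y. (if x \<in> I \<and> y \<in> I then \<omega> x y / complex_of_real t else 0) - \<omega> x y) Y)
     = (\<Sum>r\<in>R. (1 / complex_of_real t - 1) * ip B (u r) (mvec B Y (u r))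
          - ip B (u r) (mvec B Y (w r)) - ip B (w r) (mvec B Y (h r)))"
  proof -
    have spl: "ip B (h r) (mvec B Y (h r)) = ip B (u r) (mvec B Y (u r)) + ip B (u r) (mvec B Y (w r)) + ip B (w r) (mvec B Y (h r))" for r
      by (rule ip_split) (simp add: u_def w_def)
    show ?thesis
      unfolding trsplit trace_gram[OF finR] Gu Fh spl
      by (simp add: sum_divide_distrib sum_subtractf[symmetric] algebra_simps diff_divide_distrib)
  qed
  define nu where "nu r = vnorm B (u r)" for r
  define nw where "nw r = vnorm B (w r)" for r
  define nh where "nh r = vnorm B (h r)" for r
  have "cmod (mtrace B (mmul B (\<lambda>x y. (if x \<in> I \<and> y \<in> I then \<omega> x y / complex_of_real t else 0) - \<omega> x y) Y))
      \<le> (\<Sum>r\<in>R. cmod ((1 / complex_of_real t - 1) * ip B (u r) (mvec B Y (u r))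
          - ip B (u r) (mvec B Y (w r)) - ip B (w r) (mvec B Y (h r))))"
    unfolding tr by (rule norm_sum)
  also have "\<dots> \<le> (\<Sum>r\<in>R. (1 / t - 1) * (nu r * nu r) + nu r * nw r + nw r * nh r)"
  proof (rule sum_mono)
    fix r
    have c: "cmod (1 / complex_of_real t - 1) = 1 / t - 1"
    proof -
      have e: "1 / complex_of_real t - 1 = complex_of_real (1 / t - 1)" by simp
      have "1 / t - 1 \<ge> 0" using t1 tpos by (simp add: field_simps)
      then show ?thesis unfolding e norm_of_real by simp
    qed
    have "cmod ((1 / complex_of_real t - 1) * ip B (u r) (mvec B Y (u r))
          - ip B (u r) (mvec B Y (w r)) - ip B (w r) (mvec B Y (h r)))
        \<le> cmod (1 / complex_of_real t - 1) * cmod (ip B (u r) (mvec B Y (u r)))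
          + cmod (ip B (u r) (mvec B Y (w r))) + cmod (ip B (w r) (mvec B Y (h r)))"
    proof -
      have "cmod ((1 / complex_of_real t - 1) * ip B (u r) (mvec B Y (u r))
          - ip B (u r) (mvec B Y (w r)) - ip B (w r) (mvec B Y (h r)))
          \<le> cmod ((1 / complex_of_real t - 1) * ip B (u r) (mvec B Y (u r))
          - ip B (u r) (mvec B Y (w r))) + cmod (ip B (w r) (mvec B Y (h r)))"
        by (rule norm_triangle_ineq4)
      also have "cmod ((1 / complex_of_real t - 1) * ip B (u r) (mvec B Y (u r))
          - ip B (u r) (mvec B Y (w r))) \<le> cmod ((1 / complex_of_real t - 1) * ip B (u r) (mvec B Y (u r)))
          + cmod (ip B (u r) (mvec B Y (w r)))"
        by (rule norm_triangle_ineq4)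
      finally show ?thesis by (simp add: norm_mult)
    qed
    also have "\<dots> \<le> (1 / t - 1) * (nu r * nu r) + nu r * nw r + nw r * nh r"
    proof -
      have "1 / t - 1 \<ge> 0" using t1 tpos by (simp add: field_simps)
      then have "(1 / t - 1) * cmod (ip B (u r) (mvec B Y (u r))) \<le> (1 / t - 1) * (nu r * nu r)"
        unfolding nu_def by (intro mult_left_mono ip_bound[OF finB Y])
      moreover have "cmod (ip B (u r) (mvec B Y (w r))) \<le> nu r * nw r"
        unfolding nu_def nw_def by (rule ip_bound[OF finB Y])
      moreover have "cmod (ip B (w r) (mvec B Y (h r))) \<le> nw r * nh r"
        unfolding nw_def nh_def by (rule ip_bound[OF finB Y])
      ultimately show ?thesis unfolding c by linarith
    qed
    finally show "cmod ((1 / complex_of_real t - 1) * ip B (u r) (mvec B Y (u r))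
          - ip B (u r) (mvec B Y (w r)) - ip B (w r) (mvec B Y (h r)))
        \<le> (1 / t - 1) * (nu r * nu r) + nu r * nw r + nw r * nh r" .
  qed
  also have "\<dots> = (1 / t - 1) * (\<Sum>r\<in>R. (nu r)^2) + (\<Sum>r\<in>R. nu r * nw r) + (\<Sum>r\<in>R. nw r * nh r)"
    by (simp add: sum.distrib sum_distrib_left power2_eq_square)
  also have "\<dots> \<le> (1 / t - 1) * (\<Sum>r\<in>R. (nu r)^2)
       + sqrt (\<Sum>r\<in>R. (nu r)^2) * sqrt (\<Sum>r\<in>R. (nw r)^2)
       + sqrt (\<Sum>r\<in>R. (nw r)^2) * sqrt (\<Sum>r\<in>R. (nh r)^2)"
    by (intro add_mono cs_real order_refl)
  also have "\<dots> = (1 - t) + sqrt (t * (1 - t)) + sqrt (1 - t)"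
  proof -
    have su: "(\<Sum>r\<in>R. (nu r)^2) = t"
    proof -
      have "(\<Sum>r\<in>R. (nu r)^2) = (\<Sum>r\<in>R. \<Sum>x\<in>B. if x \<in> I then (cmod (F r x))^2 else 0)"
        unfolding nu_def vnorm_sq u_def h_def by (intro sum.cong refl) auto
      also have "\<dots> = (\<Sum>x\<in>B. if x \<in> I then Re (\<omega> x x) else 0)"
        by (subst sum.swap) (intro sum.cong refl, auto simp: diag)
      also have "\<dots> = t" unfolding tdef using finB I by (simp add: sum.inter_restrict[symmetric] Int_absorb1)
      finally show ?thesis .
    qed
    have sh: "(\<Sum>r\<in>R. (nh r)^2) = 1"
    proof -
      have "(\<Sum>r\<in>R. (nh r)^2) = (\<Sum>r\<in>R. \<Sum>x\<in>B. (cmod (F r x))^2)"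
        unfolding nh_def vnorm_sq h_def by simp
      also have "\<dots> = (\<Sum>x\<in>B. Re (\<omega> x x))"
        by (subst sum.swap) (intro sum.cong refl, auto simp: diag)
      finally show ?thesis using tr1 by simp
    qed
    have sw: "(\<Sum>r\<in>R. (nw r)^2) = 1 - t"
    proof -
      have e1: "(nu r)^2 = (\<Sum>x\<in>B. if x \<in> I then (cmod (F r x))^2 else 0)" for r
        unfolding nu_def vnorm_sq u_def h_def by (intro sum.cong refl) auto
      have e2: "(nh r)^2 = (\<Sum>x\<in>B. (cmod (F r x))^2)" for r
        unfolding nh_def vnorm_sq h_def by simp
      have "(\<Sum>r\<in>R. (nw r)^2) = (\<Sum>r\<in>R. \<Sum>x\<in>B. (cmod (F r x))^2 - (if x \<in> I then (cmod (F r x))^2 else 0))"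
        unfolding nw_def vnorm_sq w_def h_def by (intro sum.cong refl) auto
      also have "\<dots> = (\<Sum>r\<in>R. (nh r)^2) - (\<Sum>r\<in>R. (nu r)^2)"
        unfolding e1 e2 by (simp add: sum_subtractf)
      finally show ?thesis using su sh by simp
    qed
    have "sqrt t * sqrt (1 - t) = sqrt (t * (1 - t))" by (simp add: real_sqrt_mult)
    then show ?thesis unfolding su sw sh using tpos by (simp add: field_simps)
  qed
  finally show ?thesis .
qed

lemma gentle:
  fixes \<omega> :: "'i \<Rightarrow> 'i \<Rightarrow> complex" and F :: "'r \<Rightarrow> 'i \<Rightarrow> complex"
  assumes finB: "finite B" and neB: "B \<noteq> {}" and finR: "finite R"
    and gram: "\<forall>x\<in>B. \<forall>y\<in>B. \<omega> x y = (\<Sum>r\<in>R. cnj (F r x) * F r y)"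
    and tr1: "(\<Sum>x\<in>B. Re (\<omega> x x)) = 1"
    and I: "I \<subseteq> B" and tdef: "t = (\<Sum>x\<in>I. Re (\<omega> x x))" and tpos: "t > 0"
  shows "trnorm B (\<lambda>x y. (if x \<in> I \<and> y \<in> I then \<omega> x y / complex_of_real t else 0) - \<omega> x y)
     \<le> (1 - t) + sqrt (t * (1 - t)) + sqrt (1 - t)"
  unfolding trnorm_def
proof (rule cSup_least)
  show "{cmod (mtrace B (mmul B (\<lambda>x y. (if x \<in> I \<and> y \<in> I then \<omega> x y / complex_of_real t else 0) - \<omega> x y) Y)) | Y.
      opnorm B Y \<le> 1} \<noteq> {}"
    using opnorm_zero[OF finB neB] by blast
next
  fix z assume "z \<in> {cmod (mtrace B (mmul B (\<lambda>x y. (if x \<in> I \<and> y \<in> I then \<omega> x y / complex_of_real t else 0) - \<omega> x y) Y)) | Y.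
      opnorm B Y \<le> 1}"
  then obtain Y where "opnorm B Y \<le> 1"
    "z = cmod (mtrace B (mmul B (\<lambda>x y. (if x \<in> I \<and> y \<in> I then \<omega> x y / complex_of_real t else 0) - \<omega> x y) Y))"
    by blast
  then show "z \<le> (1 - t) + sqrt (t * (1 - t)) + sqrt (1 - t)"
    using gentle_trace[OF finB finR gram tr1 I tdef tpos] by simp
qed

lemma Scomp_edge:
  assumes "(a, b) \<in> gedge d \<rho>"
  shows "Scomp d \<rho> a = Scomp d \<rho> b"
proof -
  let ?E = "gedge d \<rho> \<union> (gedge d \<rho>)\<inverse>"
  have ab: "(a, b) \<in> ?E" and ba: "(b, a) \<in> ?E" using assms by auto
  show ?thesis unfolding Scomp_def
  proof (intro set_eqI iffI; simp)
    fix i assume "(a, i) \<in> ?E\<^sup>*"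
    then show "(b, i) \<in> ?E\<^sup>*" using ba by (rule converse_rtrancl_into_rtrancl[rotated])
  next
    fix i assume "(b, i) \<in> ?E\<^sup>*"
    then show "(a, i) \<in> ?E\<^sup>*" using ab by (rule converse_rtrancl_into_rtrancl[rotated])
  qed
qed

lemma lam_bound:
  fixes \<rho> :: "nat \<Rightarrow> nat \<Rightarrow> complex"
  assumes dens: "density {0..<d} \<rho>" and a: "a < d" and b: "b < d"
    and pa: "delta \<rho> a > 0" and pb: "delta \<rho> b > 0"
    and ne: "Scomp d \<rho> a \<noteq> Scomp d \<rho> b"
  shows "cmod (\<rho> a b) / sqrt (delta \<rho> a * delta \<rho> b) \<le> lam d \<rho>"
proof -
  obtain L where L: "\<forall>a\<in>{0..<d}. \<forall>b\<in>{0..<d}. \<rho> a b = (\<Sum>r\<in>{0..<d}. cnj (L r a) * L r b)"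
    using rho_gram[OF dens] by blast
  have cs: "cmod (\<rho> a b) \<le> sqrt (delta \<rho> a * delta \<rho> b)"
    unfolding delta_def using gram_cs[OF L] a b by simp
  have sp: "sqrt (delta \<rho> a * delta \<rho> b) > 0" using pa pb by simp
  have "a \<noteq> b" using ne by auto
  then have "(a, b) \<notin> gedge d \<rho>" using Scomp_edge ne by blast
  have neq: "cmod (\<rho> a b) \<noteq> sqrt (delta \<rho> a * delta \<rho> b)"
  proof
    assume eq: "cmod (\<rho> a b) = sqrt (delta \<rho> a * delta \<rho> b)"
    have "(a, b) \<in> gedge d \<rho>"
      unfolding gedge_def mem_Collect_eq prod.case
      using \<open>a \<noteq> b\<close> a b sp eq unfolding delta_def by blast
    then show False using \<open>(a, b) \<notin> gedge d \<rho>\<close> by blast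
  qed
  define v where "v = cmod (\<rho> a b) / sqrt (delta \<rho> a * delta \<rho> b)"
  have v1: "v < 1" unfolding v_def using cs neq sp by (simp add: field_simps)
  have Rab: "cmod (Rmat \<rho> a b) = v"
    unfolding Rmat_def v_def using pa pb by (simp add: delta_def norm_divide)
  have Rba: "cmod (Rmat \<rho> b a) = v"
  proof -
    have "a \<in> {0..<d}" "b \<in> {0..<d}" using a b by auto
    then have "\<rho> b a = cnj (\<rho> a b)" using density_herm[OF dens] unfolding herm_def by blast
    then show ?thesis unfolding Rmat_def v_def using pa pb by (simp add: delta_def norm_divide mult.commute)
  qed
  define S where "S = {cmod (Rmat \<rho> i j) | i j. i < j \<and> j < d \<and> cmod (Rmat \<rho> i j) < 1}"
  have vS: "v \<in> S"
  proof (cases "a < b")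
    case True
    then show ?thesis unfolding S_def using Rab v1 b by auto
  next
    case False
    then have "b < a" using \<open>a \<noteq> b\<close> by simp
    then show ?thesis unfolding S_def using Rba v1 a by auto
  qed
  have finS: "finite S"
  proof -
    have "S \<subseteq> (\<lambda>(i, j). cmod (Rmat \<rho> i j)) ` ({..<d} \<times> {..<d})" unfolding S_def by auto
    then show ?thesis by (rule finite_subset) simp
  qed
  have "lam d \<rho> = Max S" unfolding lam_def S_def[symmetric] Let_def using vS by auto
  then show ?thesis using Max_ge[OF finS vS] v_def by simp
qed

lemma prod_le_factor:
  fixes c :: "nat \<Rightarrow> real"
  assumes "\<And>i. i < n \<Longrightarrow> 0 \<le> c i" "\<And>i. i < n \<Longrightarrow> c i \<le> 1" "j < n"
  shows "(\<Prod>i<n. c i) \<le> c j"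
proof -
  have "(\<Prod>i<n. c i) = c j * (\<Prod>i\<in>{..<n} - {j}. c i)"
    using assms(3) by (subst prod.remove[of _ j]) auto
  also have "\<dots> \<le> c j * 1"
    using assms by (intro mult_left_mono prod_le_1) auto
  finally show ?thesis by simp
qed

lemma density_diag_pos:
  assumes "finite B" "density B \<sigma>"
  shows "\<exists>x\<in>B. Re (\<sigma> x x) > 0"
proof (rule ccontr)
  assume "\<not> ?thesis"
  then have "(\<Sum>x\<in>B. Re (\<sigma> x x)) \<le> 0" by (intro sum_nonpos) auto
  moreover have "(\<Sum>x\<in>B. Re (\<sigma> x x)) = 1"
    using density_trace[OF assms(2)] by (metis Re_sum one_complex.simps(1))
  ultimately show False by simp
qed

lemma mu_set_finite:
  assumes "finite B"
  shows "finite {opnorm B (proj I (Rmat \<sigma>)) | I. I \<subseteq> B \<and> card I \<le> k}"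
proof -
  have "{opnorm B (proj I (Rmat \<sigma>)) | I. I \<subseteq> B \<and> card I \<le> k} \<subseteq> (\<lambda>I. opnorm B (proj I (Rmat \<sigma>))) ` Pow B"
    by auto
  then show ?thesis by (rule finite_subset) (use assms in simp)
qed

lemma mu_Max_ge1:
  assumes "finite B" "density B \<sigma>" "k \<ge> 1"
  shows "Max {opnorm B (proj I (Rmat \<sigma>)) | I. I \<subseteq> B \<and> card I \<le> k} \<ge> 1"
proof -
  obtain x where x: "x \<in> B" "Re (\<sigma> x x) > 0" using density_diag_pos[OF assms(1,2)] by blast
  define e where "e = (\<lambda>i. if i = x then (1::complex) else 0)"
  have e1: "vnorm B e = 1" unfolding e_def by (rule ex_unit[OF x(1) assms(1)])
  have mv: "mvec B (proj {x} (Rmat \<sigma>)) e = (\<lambda>i. if i = x then Rmat \<sigma> x x else 0)"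
    unfolding mvec_def proj_def e_def using x(1) assms(1)
    by (auto intro!: ext simp: if_distrib cong: if_cong)
  have "vnorm B (\<lambda>i. if i = x then Rmat \<sigma> x x else 0) = cmod (Rmat \<sigma> x x)"
  proof -
    have "(\<Sum>i\<in>B. (cmod (if i = x then Rmat \<sigma> x x else 0))^2) = (cmod (Rmat \<sigma> x x))^2"
    proof -
      have "(\<Sum>i\<in>B. (cmod (if i = x then Rmat \<sigma> x x else 0))^2) = (\<Sum>i\<in>B. if i = x then (cmod (Rmat \<sigma> x x))^2 else 0)"
        by (intro sum.cong) auto
      then show ?thesis using x(1) assms(1) by simp
    qed
    then show ?thesis unfolding vnorm_def by simp
  qed
  moreover have "cmod (Rmat \<sigma> x x) \<ge> 1"
  proof -
    have "Rmat \<sigma> x x = \<sigma> x x / complex_of_real (Re (\<sigma> x x))"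
      unfolding Rmat_def using x(2) by simp
    then have "cmod (Rmat \<sigma> x x) = cmod (\<sigma> x x) / Re (\<sigma> x x)"
      using x(2) by (simp add: norm_divide)
    moreover have "cmod (\<sigma> x x) \<ge> Re (\<sigma> x x)" by (rule complex_Re_le_cmod)
    ultimately show ?thesis using x(2) by simp
  qed
  ultimately have "opnorm B (proj {x} (Rmat \<sigma>)) \<ge> 1"
    using opnorm_upper[OF assms(1) e1, of "proj {x} (Rmat \<sigma>)"] mv by simp
  moreover have "opnorm B (proj {x} (Rmat \<sigma>)) \<in> {opnorm B (proj I (Rmat \<sigma>)) | I. I \<subseteq> B \<and> card I \<le> k}"
    using x(1) assms(3) by auto
  ultimately show ?thesis using Max_ge[OF mu_set_finite[OF assms(1)]] by (meson order_trans)
qed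

lemma mu_nonneg:
  assumes "finite B" "density B \<sigma>" "k \<ge> 1"
  shows "mu k B \<sigma> \<ge> 0"
  unfolding mu_def using mu_Max_ge1[OF assms] by simp

lemma sqrt_prod: "sqrt (prod f A) = prod (\<lambda>i. sqrt (f i)) A"
  by (induction A rule: infinite_finite_induct) (auto simp: real_sqrt_mult)

lemma tensor_ratio:
  fixes \<rho> :: "nat \<Rightarrow> nat \<Rightarrow> complex"
  assumes dens: "density {0..<d} \<rho>" and x: "x \<in> tuples d n" and y: "y \<in> tuples d n"
    and px: "delta_pow n \<rho> x > 0" and py: "delta_pow n \<rho> y > 0"
  shows "cmod (tensor_pow n \<rho> x y) / sqrt (delta_pow n \<rho> x * delta_pow n \<rho> y)
     \<le> (if map (Scomp d \<rho>) x = map (Scomp d \<rho>) y then 1 else lam d \<rho>)"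
proof -
  obtain L where L: "\<forall>a\<in>{0..<d}. \<forall>b\<in>{0..<d}. \<rho> a b = (\<Sum>r\<in>{0..<d}. cnj (L r a) * L r b)"
    using rho_gram[OF dens] by blast
  define c where "c i = cmod (\<rho> (x ! i) (y ! i)) / sqrt (delta \<rho> (x ! i) * delta \<rho> (y ! i))" for i
  have xi: "x ! i < d" and yi: "y ! i < d" if "i < n" for i using tuples_nth x y that by auto
  have dxi: "delta \<rho> (x ! i) > 0" if "i < n" for i
  proof -
    have "delta \<rho> (x ! i) \<noteq> 0"
    proof
      assume "delta \<rho> (x ! i) = 0"
      then have "(\<Prod>i<n. delta \<rho> (x ! i)) = 0" using that by (intro prod_zero) auto
      then show False using px unfolding delta_pow_def by linarith
    qed
    then show ?thesis using delta_nonneg[OF dens xi[OF that]] by simp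
  qed
  have dyi: "delta \<rho> (y ! i) > 0" if "i < n" for i
  proof -
    have "delta \<rho> (y ! i) \<noteq> 0"
    proof
      assume "delta \<rho> (y ! i) = 0"
      then have "(\<Prod>i<n. delta \<rho> (y ! i)) = 0" using that by (intro prod_zero) auto
      then show False using py unfolding delta_pow_def by linarith
    qed
    then show ?thesis using delta_nonneg[OF dens yi[OF that]] by simp
  qed
  have c0: "c i \<ge> 0" if "i < n" for i unfolding c_def using dxi[OF that] dyi[OF that] by simp
  have c1: "c i \<le> 1" if "i < n" for i
  proof -
    have "cmod (\<rho> (x ! i) (y ! i)) \<le> sqrt (delta \<rho> (x ! i) * delta \<rho> (y ! i))"
      unfolding delta_def using gram_cs[OF L] xi[OF that] yi[OF that] by simp
    moreover have "sqrt (delta \<rho> (x ! i) * delta \<rho> (y ! i)) > 0" using dxi[OF that] dyi[OF that] by simp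
    ultimately show ?thesis unfolding c_def by simp
  qed
  have eq: "cmod (tensor_pow n \<rho> x y) / sqrt (delta_pow n \<rho> x * delta_pow n \<rho> y) = (\<Prod>i<n. c i)"
  proof -
    have "cmod (tensor_pow n \<rho> x y) = (\<Prod>i<n. cmod (\<rho> (x ! i) (y ! i)))"
      unfolding tensor_pow_def by (simp add: prod_norm)
    moreover have "sqrt (delta_pow n \<rho> x * delta_pow n \<rho> y) = (\<Prod>i<n. sqrt (delta \<rho> (x ! i) * delta \<rho> (y ! i)))"
      unfolding delta_pow_def by (simp add: sqrt_prod prod.distrib[symmetric])
    ultimately show ?thesis unfolding c_def by (simp add: prod_dividef)
  qed
  show ?thesis
  proof (cases "map (Scomp d \<rho>) x = map (Scomp d \<rho>) y")
    case True
    have "(\<Prod>i<n. c i) \<le> 1" using c0 c1 by (intro prod_le_1) auto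
    then show ?thesis using eq True by simp
  next
    case False
    have lx: "length x = n" and ly: "length y = n" using x y unfolding tuples_def by auto
    obtain i where i: "i < n" "Scomp d \<rho> (x ! i) \<noteq> Scomp d \<rho> (y ! i)"
      using False lx ly by (metis list_eq_iff_nth_eq length_map nth_map)
    have "c i \<le> lam d \<rho>" unfolding c_def
      by (rule lam_bound[OF dens xi[OF i(1)] yi[OF i(1)] dxi[OF i(1)] dyi[OF i(1)] i(2)])
    moreover have "(\<Prod>i<n. c i) \<le> c i" using c0 c1 i(1) by (intro prod_le_factor) auto
    ultimately show ?thesis using eq False by simp
  qed
qed

lemma Vset_facts:
  assumes fin: "finite \<Omega>" and pn: "\<And>x. x \<in> \<Omega> \<Longrightarrow> p x \<ge> 0" and ps: "(\<Sum>x\<in>\<Omega>. p x) = 1"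
    and q: "q \<in> Vset \<Omega> p e"
  shows "\<exists>I\<subseteq>\<Omega>. (\<Sum>i\<in>I. p i) > 0 \<and> q = (\<lambda>x. if x \<in> I then p x / (\<Sum>i\<in>I. p i) else 0)
           \<and> 2 * (1 - (\<Sum>i\<in>I. p i)) \<le> e"
proof -
  obtain I where I: "I \<subseteq> \<Omega>" "(\<Sum>i\<in>I. p i) > 0" and qI: "q = (\<lambda>x. if x \<in> I then p x / (\<Sum>i\<in>I. p i) else 0)"
    and qe: "(\<Sum>x\<in>\<Omega>. \<bar>q x - p x\<bar>) \<le> e"
    using q unfolding Vset_def by blast
  define t where "t = (\<Sum>i\<in>I. p i)"
  have tpos: "t > 0" using I t_def by simp
  have t1: "t \<le> 1" unfolding t_def using ps sum_mono2[OF fin I(1), of p] pn by auto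
  have "(\<Sum>x\<in>\<Omega>. \<bar>q x - p x\<bar>) = (\<Sum>x\<in>\<Omega>. if x \<in> I then p x * (1 / t - 1) else p x)"
  proof (intro sum.cong refl)
    fix x assume x: "x \<in> \<Omega>"
    show "\<bar>q x - p x\<bar> = (if x \<in> I then p x * (1 / t - 1) else p x)"
    proof (cases "x \<in> I")
      case True
      have "1 / t - 1 \<ge> 0" using tpos t1 by (simp add: field_simps)
      then have "p x * (1 / t - 1) \<ge> 0" using pn[OF x] by simp
      moreover have "q x - p x = p x * (1 / t - 1)" using True unfolding qI t_def[symmetric] by (simp add: field_simps)
      ultimately show ?thesis using True by simp
    next
      case False
      then show ?thesis unfolding qI using pn[OF x] by simp
    qed
  qed
  also have "\<dots> = (\<Sum>x\<in>I. p x * (1 / t - 1)) + (\<Sum>x\<in>\<Omega> - I. p x)"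
  proof -
    have "(\<Sum>x\<in>\<Omega>. if x \<in> I then p x * (1 / t - 1) else p x)
        = (\<Sum>x\<in>\<Omega> \<inter> {x. x \<in> I}. p x * (1 / t - 1)) + (\<Sum>x\<in>\<Omega> \<inter> - {x. x \<in> I}. p x)"
      by (rule sum.If_cases[OF fin])
    moreover have "\<Omega> \<inter> {x. x \<in> I} = I" "\<Omega> \<inter> - {x. x \<in> I} = \<Omega> - I" using I(1) by auto
    ultimately show ?thesis by simp
  qed
  also have "\<dots> = 2 * (1 - t)"
  proof -
    have "(\<Sum>x\<in>I. p x * (1 / t - 1)) = t * (1 / t - 1)" unfolding t_def by (simp add: sum_distrib_right)
    also have "\<dots> = 1 - t" using tpos by (simp add: field_simps)
    finally have a: "(\<Sum>x\<in>I. p x * (1 / t - 1)) = 1 - t" .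
    have b: "(\<Sum>x\<in>\<Omega> - I. p x) = 1 - t" unfolding t_def using sum_diff[OF fin I(1), of p] ps by simp
    show ?thesis using a b by simp
  qed
  finally show ?thesis using I qI qe t_def by auto
qed

lemma htilde_attained:
  assumes fin: "finite \<Omega>" and ps: "(\<Sum>x\<in>\<Omega>. p x) = 1" and e: "e \<ge> 0"
  shows "\<exists>q\<in>Vset \<Omega> p e. htilde \<Omega> p Y e = hmax \<Omega> q Y"
proof -
  have finV: "finite (Vset \<Omega> p e)"
  proof -
    have "Vset \<Omega> p e \<subseteq> (\<lambda>I. (\<lambda>x. if x \<in> I then p x / (\<Sum>i\<in>I. p i) else 0)) ` Pow \<Omega>"
      unfolding Vset_def by auto
    then show ?thesis by (rule finite_subset) (use fin in simp)
  qed
  have "(\<lambda>x. if x \<in> \<Omega> then p x / (\<Sum>i\<in>\<Omega>. p i) else 0) \<in> Vset \<Omega> p e"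
    unfolding Vset_def using ps e by auto
  then have ne: "Vset \<Omega> p e \<noteq> {}" by blast
  have "htilde \<Omega> p Y e \<in> (\<lambda>q. hmax \<Omega> q Y) ` Vset \<Omega> p e"
    unfolding htilde_def by (rule Min_in) (use finV ne in auto)
  then show ?thesis by auto
qed

lemma hmax_card:
  assumes fin: "finite \<Omega>" and x: "x \<in> \<Omega>" and qx: "q x > 0"
  shows "real (card {z\<in>\<Omega>. q z > 0 \<and> Y z = Y x}) \<le> 2 powr hmax \<Omega> q Y"
proof -
  define Hs where "Hs = {log 2 (real (card {x\<in>\<Omega>. q x > 0 \<and> Y x = y})) | y. \<exists>x\<in>\<Omega>. q x > 0 \<and> Y x = y}"
  have finH: "finite Hs"
  proof -
    have "Hs \<subseteq> (\<lambda>y. log 2 (real (card {x\<in>\<Omega>. q x > 0 \<and> Y x = y}))) ` (Y ` \<Omega>)" unfolding Hs_def by auto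
    then show ?thesis by (rule finite_subset) (use fin in simp)
  qed
  have inH: "log 2 (real (card {z\<in>\<Omega>. q z > 0 \<and> Y z = Y x})) \<in> Hs" unfolding Hs_def using x qx by blast
  have le: "log 2 (real (card {z\<in>\<Omega>. q z > 0 \<and> Y z = Y x})) \<le> hmax \<Omega> q Y"
    unfolding hmax_def Hs_def[symmetric] by (rule Max_ge[OF finH inH])
  have cpos: "real (card {z\<in>\<Omega>. q z > 0 \<and> Y z = Y x}) > 0"
  proof -
    have "x \<in> {z\<in>\<Omega>. q z > 0 \<and> Y z = Y x}" using x qx by simp
    moreover have "finite {z\<in>\<Omega>. q z > 0 \<and> Y z = Y x}" using fin by simp
    ultimately show ?thesis by (simp add: card_gt_0_iff) blast
  qed
  have "real (card {z\<in>\<Omega>. q z > 0 \<and> Y z = Y x}) = 2 powr log 2 (real (card {z\<in>\<Omega>. q z > 0 \<and> Y z = Y x}))"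
    using cpos by simp
  also have "\<dots> \<le> 2 powr hmax \<Omega> q Y" by (rule powr_mono[OF le]) simp
  finally show ?thesis .
qed

theorem proposition2:
  fixes \<rho> :: "nat \<Rightarrow> nat \<Rightarrow> complex" and d n k :: nat and \<epsilon> :: real
  assumes "density {0..<d} \<rho>" and "lam d \<rho> > 0"
    and "\<epsilon> > 0" and "n \<ge> 1" and "k \<ge> 1"
  shows "mu_eps k \<epsilon> (tuples d n) (tensor_pow n \<rho>)
     \<le> log 2 (real k) + log 2 (lam d \<rho>)
        + log 2 (1 + 2 powr (htilde (tuples d n) (delta_pow n \<rho>) (map (Scomp d \<rho>)) (\<epsilon>^2 / 4))
                      / (real k * lam d \<rho>))"
proof -
  note dens = assms(1)
  define T where "T = tuples d n"
  define p where "p = delta_pow n \<rho>"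
  define Y where "Y = map (Scomp d \<rho>)"
  define \<omega> where "\<omega> = tensor_pow n \<rho>"
  define lm where "lm = lam d \<rho>"
  define H where "H = htilde T p Y (\<epsilon>^2 / 4)"
  have lmpos: "lm > 0" using assms(2) lm_def by simp
  have finT: "finite T" unfolding T_def by (rule finite_tuples)
  have d1: "d \<ge> 1"
  proof (rule ccontr)
    assume "\<not> d \<ge> 1"
    then have "d = 0" by simp
    then show False using density_trace[OF dens] by simp
  qed
  have neT: "T \<noteq> {}"
  proof -
    have "replicate n 0 \<in> T" unfolding T_def tuples_def using d1 by auto
    then show ?thesis by blast
  qed
  have pn: "p x \<ge> 0" if "x \<in> T" for x unfolding p_def using delta_pow_nonneg[OF dens] that T_def by simp
  have ps: "(\<Sum>x\<in>T. p x) = 1" unfolding p_def T_def by (rule delta_pow_sum[OF dens])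
  have \<omega>diag: "\<omega> x x = complex_of_real (p x)" if "x \<in> T" for x
    unfolding \<omega>_def p_def using tensor_diag[OF dens] that T_def by simp
  obtain L where L: "\<forall>a\<in>{0..<d}. \<forall>b\<in>{0..<d}. \<rho> a b = (\<Sum>r\<in>{0..<d}. cnj (L r a) * L r b)"
    using rho_gram[OF dens] by blast
  define F where "F = tgram L n"
  have gram: "\<forall>x\<in>T. \<forall>y\<in>T. \<omega> x y = (\<Sum>r\<in>T. cnj (F r x) * F r y)"
    unfolding \<omega>_def F_def T_def by (rule tensor_gram[OF L])
  have e0: "\<epsilon>^2 / 4 \<ge> 0" by simp
  obtain q where qV: "q \<in> Vset T p (\<epsilon>^2 / 4)" and Hq: "H = hmax T q Y"
    using htilde_attained[OF finT ps e0, of Y] H_def by blast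
  obtain I where I: "I \<subseteq> T" and tpos0: "(\<Sum>i\<in>I. p i) > 0"
    and qI: "q = (\<lambda>x. if x \<in> I then p x / (\<Sum>i\<in>I. p i) else 0)"
    and te: "2 * (1 - (\<Sum>i\<in>I. p i)) \<le> \<epsilon>^2 / 4"
    using Vset_facts[OF finT pn ps qV] by blast
  define t where "t = (\<Sum>i\<in>I. p i)"
  have tpos: "t > 0" using tpos0 t_def by simp
  have t1: "t \<le> 1" unfolding t_def using ps sum_mono2[OF finT I, of p] pn by auto
  have tRe: "t = (\<Sum>x\<in>I. Re (\<omega> x x))" unfolding t_def using I \<omega>diag by (intro sum.cong) auto
  have tr1: "(\<Sum>x\<in>T. Re (\<omega> x x)) = 1" using ps \<omega>diag by simp
  define \<sigma> where "\<sigma> = (\<lambda>x y. if x \<in> I \<and> y \<in> I then \<omega> x y / complex_of_real t else 0)"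
  have herm\<omega>: "herm T \<omega>" by (rule gram_herm[OF gram])
  have dens\<sigma>: "density T \<sigma>"
  proof -
    have h: "\<forall>i\<in>T. \<forall>j\<in>T. \<sigma> i j = cnj (\<sigma> j i)"
    proof (intro ballI)
      fix i j assume i: "i \<in> T" and j: "j \<in> T"
      have "\<omega> i j = cnj (\<omega> j i)" using herm\<omega> i j unfolding herm_def by blast
      then show "\<sigma> i j = cnj (\<sigma> j i)" unfolding \<sigma>_def by auto
    qed
    define G where "G r x = (if x \<in> I then F r x / complex_of_real (sqrt t) else 0)" for r x
    have gG: "\<forall>x\<in>T. \<forall>y\<in>T. \<sigma> x y = (\<Sum>r\<in>T. cnj (G r x) * G r y)"
    proof (intro ballI)
      fix x y assume x: "x \<in> T" and y: "y \<in> T"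
      show "\<sigma> x y = (\<Sum>r\<in>T. cnj (G r x) * G r y)"
      proof (cases "x \<in> I \<and> y \<in> I")
        case True
        have "(\<Sum>r\<in>T. cnj (G r x) * G r y) = (\<Sum>r\<in>T. cnj (F r x) * F r y) / (complex_of_real (sqrt t) * complex_of_real (sqrt t))"
          unfolding G_def using True by (simp add: sum_divide_distrib)
        also have "complex_of_real (sqrt t) * complex_of_real (sqrt t) = complex_of_real t"
          using tpos by (simp flip: of_real_mult)
        finally show ?thesis unfolding \<sigma>_def using True gram x y by simp
      next
        case False
        then show ?thesis unfolding \<sigma>_def G_def by auto
      qed
    qed
    have psd: "psd T \<sigma>" by (rule gram_psd[OF finT gG])
    have tr: "mtrace T \<sigma> = 1"
    proof -
      have "mtrace T \<sigma> = (\<Sum>x\<in>T. if x \<in> I then complex_of_real (p x) / complex_of_real t else 0)"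
        unfolding mtrace_def \<sigma>_def using \<omega>diag by (intro sum.cong) auto
      also have "\<dots> = (\<Sum>x\<in>I. complex_of_real (p x) / complex_of_real t)"
        using I finT by (simp add: sum.inter_restrict[symmetric] Int_absorb1)
      also have "\<dots> = complex_of_real t / complex_of_real t"
        unfolding t_def by (simp only: sum_divide_distrib[symmetric] of_real_sum)
      finally show ?thesis using tpos by simp
    qed
    show ?thesis unfolding density_def using h psd tr unfolding psd_def qf_def by blast
  qed
  have trn: "trnorm T (\<lambda>i j. \<sigma> i j - \<omega> i j) \<le> \<epsilon>"
  proof -
    have "trnorm T (\<lambda>i j. \<sigma> i j - \<omega> i j) \<le> (1 - t) + sqrt (t * (1 - t)) + sqrt (1 - t)"
      unfolding \<sigma>_def by (rule gentle[OF finT neT finT gram tr1 I tRe tpos])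
    also have "\<dots> \<le> sqrt (8 * (1 - t))"
      using sqrt_bound[of "1 - t"] tpos t1 by (simp add: mult.commute)
    also have "\<dots> \<le> sqrt (\<epsilon>^2)" using te t_def by (intro real_sqrt_le_mono) simp
    also have "\<dots> = \<epsilon>" using assms(3) by simp
    finally show ?thesis .
  qed
  have inset: "mu k T \<sigma> \<in> {mu k T \<sigma>' | \<sigma>'. density T \<sigma>' \<and> trnorm T (\<lambda>i j. \<sigma>' i j - \<omega> i j) \<le> \<epsilon>}"
    using dens\<sigma> trn by blast
  have bdd: "bdd_below {mu k T \<sigma>' | \<sigma>'. density T \<sigma>' \<and> trnorm T (\<lambda>i j. \<sigma>' i j - \<omega> i j) \<le> \<epsilon>}"
    by (rule bdd_belowI[where m=0]) (use mu_nonneg[OF finT _ assms(5)] in auto)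
  have step1: "mu_eps k \<epsilon> T \<omega> \<le> mu k T \<sigma>"
    unfolding mu_eps_def by (rule cInf_lower[OF inset bdd])
  define r where "r = 2 powr H + real k * lm"
  have r0: "r \<ge> 0" unfolding r_def using lmpos by simp
  have qpos: "q x > 0 \<longleftrightarrow> x \<in> I \<and> p x > 0" for x
  proof (cases "x \<in> I")
    case True
    then show ?thesis unfolding qI t_def[symmetric] using tpos by (simp add: zero_less_divide_iff)
  next
    case False
    then show ?thesis unfolding qI by simp
  qed
  have Resig: "Re (\<sigma> x x) = (if x \<in> I then p x / t else 0)" for x
  proof (cases "x \<in> I")
    case True
    then have "x \<in> T" using I by auto
    then show ?thesis unfolding \<sigma>_def using True \<omega>diag by (simp flip: of_real_divide)
  qed (simp add: \<sigma>_def)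
  define \<beta> where "\<beta> x y = (if q x > 0 \<and> q y > 0 then (if Y x = Y y then 1 else lm) else 0)" for x y
  have \<beta>0: "\<beta> x y \<ge> 0" for x y unfolding \<beta>_def using lmpos by simp
  have \<beta>sym: "\<beta> x y = \<beta> y x" for x y unfolding \<beta>_def by auto
  have Rsig: "cmod (Rmat \<sigma> x y) \<le> \<beta> x y" if x: "x \<in> T" and y: "y \<in> T" for x y
  proof (cases "Re (\<sigma> x x) > 0 \<and> Re (\<sigma> y y) > 0")
    case True
    then have xI: "x \<in> I" and yI: "y \<in> I" and px: "p x > 0" and py: "p y > 0"
      unfolding Resig using tpos by (auto split: if_splits simp: zero_less_divide_iff)
    have qx: "q x > 0" and qy: "q y > 0" using qpos xI yI px py by auto
    have sx: "Re (\<sigma> x x) = p x / t" and sy: "Re (\<sigma> y y) = p y / t" using Resig xI yI by auto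
    have sxy: "\<sigma> x y = \<omega> x y / complex_of_real t" using xI yI by (simp add: \<sigma>_def)
    have "Rmat \<sigma> x y = \<sigma> x y / complex_of_real (sqrt (Re (\<sigma> x x) * Re (\<sigma> y y)))"
      unfolding Rmat_def using True by simp
    also have "\<dots> = (\<omega> x y / complex_of_real t) / complex_of_real (sqrt (p x / t * (p y / t)))"
      unfolding sx sy sxy ..
    also have "sqrt (p x / t * (p y / t)) = sqrt (p x * p y) / t"
      using tpos by (simp add: real_sqrt_divide real_sqrt_mult)
    finally have "cmod (Rmat \<sigma> x y) = (cmod (\<omega> x y) / t) / (sqrt (p x * p y) / t)"
      using tpos px py by (simp add: norm_divide)
    also have "\<dots> = cmod (\<omega> x y) / sqrt (p x * p y)" using tpos by simp
    also have "\<dots> \<le> (if Y x = Y y then 1 else lm)"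
      unfolding \<omega>_def p_def Y_def lm_def
      using tensor_ratio[OF dens _ _ px[unfolded p_def] py[unfolded p_def]] x y T_def by simp
    finally show ?thesis unfolding \<beta>_def using qx qy by simp
  next
    case False
    then have "Rmat \<sigma> x y = 0" unfolding Rmat_def by auto
    then show ?thesis using \<beta>0 by simp
  qed
  have opn: "opnorm T (proj K (Rmat \<sigma>)) \<le> r" if K: "K \<subseteq> T" "card K \<le> k" for K
  proof -
    define \<beta>K where "\<beta>K x y = (if x \<in> K \<and> y \<in> K then \<beta> x y else 0)" for x y
    have Mb: "cmod (proj K (Rmat \<sigma>) x y) \<le> \<beta>K x y" if "x \<in> T" "y \<in> T" for x y
      unfolding proj_def \<beta>K_def using Rsig[OF that] by simp
    have rowb: "(\<Sum>y\<in>T. \<beta>K x y) \<le> r" if x: "x \<in> T" for x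
    proof -
      define C where "C = {z\<in>T. q z > 0 \<and> Y z = Y x}"
      have "(\<Sum>y\<in>T. \<beta>K x y) \<le> (\<Sum>y\<in>T. (if q x > 0 \<and> y \<in> C then 1 else 0) + (if y \<in> K then lm else 0))"
      proof (rule sum_mono)
        fix y assume y: "y \<in> T"
        show "\<beta>K x y \<le> (if q x > 0 \<and> y \<in> C then 1 else 0) + (if y \<in> K then lm else 0)"
          unfolding \<beta>K_def \<beta>_def C_def using y lmpos by auto
      qed
      also have "\<dots> = (\<Sum>y\<in>T. (if q x > 0 \<and> y \<in> C then 1 else 0)) + (\<Sum>y\<in>T. (if y \<in> K then lm else 0))"
        by (rule sum.distrib)
      also have "(\<Sum>y\<in>T. (if y \<in> K then lm else 0)) = lm * real (card K)"
      proof -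
        have "(\<Sum>y\<in>T. (if y \<in> K then lm else 0)) = (\<Sum>y\<in>T \<inter> K. lm)"
          by (rule sum.inter_restrict[symmetric, OF finT])
        also have "T \<inter> K = K" using K by auto
        finally show ?thesis by simp
      qed
      also have "(\<Sum>y\<in>T. (if q x > 0 \<and> y \<in> C then 1 else 0)) \<le> 2 powr H"
      proof (cases "q x > 0")
        case True
        have "(\<Sum>y\<in>T. (if q x > 0 \<and> y \<in> C then 1 else (0::real))) = (\<Sum>y\<in>T \<inter> C. 1)"
          using True by (simp add: sum.inter_restrict[symmetric, OF finT])
        also have "T \<inter> C = C" unfolding C_def by auto
        also have "(\<Sum>y\<in>C. (1::real)) = real (card C)" by simp
        also have "\<dots> \<le> 2 powr H" unfolding C_def Hq by (rule hmax_card[where q=q, OF finT x True])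
        finally show ?thesis .
      next
        case False
        then show ?thesis by simp
      qed
      finally have "(\<Sum>y\<in>T. \<beta>K x y) \<le> 2 powr H + lm * real (card K)" by simp
      also have "\<dots> \<le> r" unfolding r_def using K(2) lmpos by (simp add: mult.commute)
      finally show ?thesis .
    qed
    show ?thesis
    proof (rule opnorm_schur[OF finT neT r0])
      fix x assume x: "x \<in> T"
      have "(\<Sum>y\<in>T. cmod (proj K (Rmat \<sigma>) x y)) \<le> (\<Sum>y\<in>T. \<beta>K x y)"
        using Mb x by (intro sum_mono) auto
      then show "(\<Sum>y\<in>T. cmod (proj K (Rmat \<sigma>) x y)) \<le> r" using rowb[OF x] by simp
    next
      fix y assume y: "y \<in> T"
      have "(\<Sum>x\<in>T. cmod (proj K (Rmat \<sigma>) x y)) \<le> (\<Sum>x\<in>T. \<beta>K y x)"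
      proof (rule sum_mono)
        fix x assume x: "x \<in> T"
        have "\<beta>K x y = \<beta>K y x" unfolding \<beta>K_def using \<beta>sym by auto
        then show "cmod (proj K (Rmat \<sigma>) x y) \<le> \<beta>K y x" using Mb[OF x y] by simp
      qed
      then show "(\<Sum>x\<in>T. cmod (proj K (Rmat \<sigma>) x y)) \<le> r" using rowb[OF y] by simp
    qed
  qed
  have Maxle: "Max {opnorm T (proj K (Rmat \<sigma>)) | K. K \<subseteq> T \<and> card K \<le> k} \<le> r"
  proof (rule Max.boundedI)
    show "finite {opnorm T (proj K (Rmat \<sigma>)) | K. K \<subseteq> T \<and> card K \<le> k}" by (rule mu_set_finite[OF finT])
    show "{opnorm T (proj K (Rmat \<sigma>)) | K. K \<subseteq> T \<and> card K \<le> k} \<noteq> {}" by auto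
  qed (use opn in auto)
  have Maxge: "Max {opnorm T (proj K (Rmat \<sigma>)) | K. K \<subseteq> T \<and> card K \<le> k} \<ge> 1"
    by (rule mu_Max_ge1[OF finT dens\<sigma> assms(5)])
  have step2: "mu k T \<sigma> \<le> log 2 r"
    unfolding mu_def using Maxle Maxge by simp
  have rhs: "log 2 (real k) + log 2 lm + log 2 (1 + 2 powr H / (real k * lm)) = log 2 r"
  proof -
    have kpos: "real k > 0" using assms(5) by simp
    have "log 2 (real k) + log 2 lm + log 2 (1 + 2 powr H / (real k * lm))
        = log 2 (real k * lm * (1 + 2 powr H / (real k * lm)))"
      using kpos lmpos by (simp add: log_mult_pos add_pos_nonneg)
    also have "real k * lm * (1 + 2 powr H / (real k * lm)) = r"
      unfolding r_def using kpos lmpos by (simp add: field_simps)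
    finally show ?thesis .
  qed
  have "mu_eps k \<epsilon> T \<omega> \<le> log 2 (real k) + log 2 lm + log 2 (1 + 2 powr H / (real k * lm))"
    using step1 step2 rhs by simp
  then show ?thesis unfolding T_def \<omega>_def lm_def H_def p_def Y_def .
qed

end
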